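(* Consider the pulse-coupled network below and its synchronous periodic orbit $\phi_i(t)=\phi_0(t)$ for all $i$, which has period $T=\tau+1-\alpha$ with $\alpha=U^{-1}(U(\tau)+\varepsilon)$. Let $\boldsymbol\delta=(\delta_1,\dots,\delta_N)$ be a perturbation of the phases, applied at a time at which all units have fired and all pulses in transit have been received. Suppose $\max_i\delta_i-\min_i\delta_i<\tau$. For each $i$, let $j_1(i),\dots,j_{k_i}(i)$ be an enumeration of $\mathrm{Pre}(i)$ with $\delta_{j_1(i)}\ge\dots\ge\delta_{j_{k_i}(i)}$; this is the order in which $i$ receives the pulses. Then the perturbation $\boldsymbol\delta(T)$ after one period satisfies, to first order in $\boldsymbol\delta$, $$\delta_i(T)=p_{i,0}\,\delta_i+\sum_{n=1}^{k_i}(p_{i,n}-p_{i,n-1})\,\delta_{j_n(i)}+O(\|\boldsymbol\delta\|^2),$$ i.e. $\boldsymbol\delta(T)=A(\mathcal O)\boldsymbol\delta+O(\|\boldsymbol\delta\|^2)$, where $\mathcal O$ is the ordering just described. Thus the linearized dynamics is piecewise linear, with the operator depending on the rank order of $\boldsymbol\delta$.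
   Context: Let $U$ be a twice continuously differentiable function on an interval $I$ containing $[0,1]$ (and all points at which it is evaluated), with $U'>0$, $U''<0$, $U(0)=0$ and $U(1)=1$. For $\epsilon\in\mathbb R$ put $H_\epsilon(\phi)=U^{-1}(U(\phi)+\epsilon)$. The network consists of $N$ units with phases $\phi_i(t)$. For each $i$, $\mathrm{Pre}(i)\subseteq\{1,\dots,N\}\setminus\{i\}$ is nonempty with $k_i=|\mathrm{Pre}(i)|$. The couplings satisfy $\varepsilon_{ij}\ne0$ if and only if $j\in\mathrm{Pre}(i)$, and $\sum_j\varepsilon_{ij}=\varepsilon$ for all $i$, with $U(\tau)+\varepsilon<1$. The delay is $\tau\in(0,1)$, and all partial inputs are assumed subthreshold. Dynamics: - Between events, $d\phi_i/dt=1$. - When $\phi_j$ reaches $1$, it is reset to $0$ and a pulse is sent to every $i$ with $j\in\mathrm{Pre}(i)$. - That pulse arrives at time $t+\tau$ and sets $\phi_i\mapsto H_{\varepsilon_{ij}}(\phi_i)$ if $U(\phi_i)+\varepsilon_{ij}<1$, and $\phi_i\mapsto 0$ (with a pulse emitted) otherwise. Perturbations are $\delta_i=\phi_i(0)-\phi_0(0)$, and $\delta_i(T)$ is the corresponding phase difference after the stroboscopic time-$T$ map. For an enumeration $\mathcal O=(j_n(i))$ define $$p_{i,n}=\frac{U'\Big(U^{-1}\big(U(\tau)+\sum_{m=1}^{n}\varepsilon_{ij_m(i)}\big)\Big)}{U'\big(U^{-1}(U(\tau)+\varepsilon)\big)},\qquad n=0,\dots,k_i.$$ The stability matrix $A(\mathcal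 O)$ has entries - $A_{ii}=p_{i,0}$; - $A_{ij_n(i)}=p_{i,n}-p_{i,n-1}$; - all other entries are $0$. *)

theory Defs
  imports "HOL-Analysis.Analysis"
begin

text \<open>Pulse-coupled network with delay. Units are indexed by 1..N.
  Parameters: U (potential function), I (its domain interval), Pre (presynaptic sets),
  eps i j (coupling from j to i), tau (delay).\<close>

definition Hmap :: "(real \<Rightarrow> real) \<Rightarrow> real set \<Rightarrow> real \<Rightarrow> real \<Rightarrow> real" where
  "Hmap U I e phi = the_inv_into I U (U phi + e)"

record netstate =
  st_time :: real
  st_ph   :: "nat \<Rightarrow> real"
  st_pend :: "(real \<times> nat) list"   \<comment> \<open>pulses in transit: (arrival time, sending unit)\<close>

definition next_event :: "nat \<Rightarrow> netstate \<Rightarrow> real" where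
  "next_event N s =
     (let tf = st_time s + Min ((\<lambda>i. 1 - st_ph s i) ` {1..N})
      in if st_pend s = [] then tf else min tf (Min (fst ` set (st_pend s))))"

definition deliver ::
  "(real \<Rightarrow> real) \<Rightarrow> real set \<Rightarrow> nat \<Rightarrow> (nat \<Rightarrow> nat set) \<Rightarrow> (nat \<Rightarrow> nat \<Rightarrow> real) \<Rightarrow> real
   \<Rightarrow> real \<Rightarrow> nat \<Rightarrow> (nat \<Rightarrow> real) \<times> (real \<times> nat) list \<Rightarrow> (nat \<Rightarrow> real) \<times> (real \<times> nat) list" where
  "deliver U I N Pre eps tau te j acc =
     (let ph = fst acc; out = snd acc in
      ((\<lambda>i. if i \<in> {1..N} \<and> j \<in> Pre i then
               (if U (ph i) + eps i j < 1 then Hmap U I (eps i j) (ph i) else 0)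
             else ph i),
       out @ map (\<lambda>i. (te + tau, i))
               (sorted_list_of_set {i \<in> {1..N}. j \<in> Pre i \<and> \<not> (U (ph i) + eps i j < 1)})))"

definition net_step ::
  "(real \<Rightarrow> real) \<Rightarrow> real set \<Rightarrow> nat \<Rightarrow> (nat \<Rightarrow> nat set) \<Rightarrow> (nat \<Rightarrow> nat \<Rightarrow> real) \<Rightarrow> real
   \<Rightarrow> netstate \<Rightarrow> netstate" where
  "net_step U I N Pre eps tau s =
     (let te = next_event N s;
          ph1 = (\<lambda>i. st_ph s i + (te - st_time s));
          F = {i \<in> {1..N}. 1 \<le> ph1 i};
          ph2 = (\<lambda>i. if i \<in> F then 0 else ph1 i);
          fired = map (\<lambda>i. (te + tau, i)) (sorted_list_of_set F);
          arr = filter (\<lambda>p. fst p \<le> te) (st_pend s);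
          rest = filter (\<lambda>p. \<not> fst p \<le> te) (st_pend s);
          r = fold (\<lambda>p acc. deliver U I N Pre eps tau te (snd p) acc) arr (ph2, [])
      in \<lparr>st_time = te, st_ph = fst r, st_pend = rest @ fired @ snd r\<rparr>)"

definition phases_at ::
  "(real \<Rightarrow> real) \<Rightarrow> real set \<Rightarrow> nat \<Rightarrow> (nat \<Rightarrow> nat set) \<Rightarrow> (nat \<Rightarrow> nat \<Rightarrow> real) \<Rightarrow> real
   \<Rightarrow> netstate \<Rightarrow> real \<Rightarrow> nat \<Rightarrow> real" where
  "phases_at U I N Pre eps tau s Tend i =
     (let n = (LEAST n. Tend < next_event N ((net_step U I N Pre eps tau ^^ n) s));
          s' = (net_step U I N Pre eps tau ^^ n) s
      in st_ph s' i + (Tend - st_time s'))"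

definition init_state :: "real \<Rightarrow> (nat \<Rightarrow> real) \<Rightarrow> netstate" where
  "init_state theta delta = \<lparr>st_time = 0, st_ph = (\<lambda>i. theta + delta i), st_pend = []\<rparr>"

text \<open>The coefficients p_{i,n} for an enumeration Ord (Ord i n = j_n(i)).\<close>
definition pcoef ::
  "(real \<Rightarrow> real) \<Rightarrow> (real \<Rightarrow> real) \<Rightarrow> real set \<Rightarrow> (nat \<Rightarrow> nat \<Rightarrow> real) \<Rightarrow> real \<Rightarrow> real
   \<Rightarrow> (nat \<Rightarrow> nat \<Rightarrow> nat) \<Rightarrow> nat \<Rightarrow> nat \<Rightarrow> real" where
  "pcoef U U' I eps epsilon tau Ord i n =
     U' (the_inv_into I U (U tau + (\<Sum>m = 1..n. eps i (Ord i m))))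
     / U' (the_inv_into I U (U tau + epsilon))"

definition stabA ::
  "(real \<Rightarrow> real) \<Rightarrow> (real \<Rightarrow> real) \<Rightarrow> real set \<Rightarrow> (nat \<Rightarrow> nat set) \<Rightarrow> (nat \<Rightarrow> nat \<Rightarrow> real)
   \<Rightarrow> real \<Rightarrow> real \<Rightarrow> (nat \<Rightarrow> nat \<Rightarrow> nat) \<Rightarrow> nat \<Rightarrow> nat \<Rightarrow> real" where
  "stabA U U' I Pre eps epsilon tau Ord i l =
     (if l = i then pcoef U U' I eps epsilon tau Ord i 0
      else if (\<exists>n \<in> {1..card (Pre i)}. Ord i n = l) then
        (let n = (THE n. n \<in> {1..card (Pre i)} \<and> Ord i n = l) in
          pcoef U U' I eps epsilon tau Ord i n - pcoef U U' I eps epsilon tau Ord i (n - 1))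
      else 0)"

definition dnorm :: "nat \<Rightarrow> (nat \<Rightarrow> real) \<Rightarrow> real" where
  "dnorm N delta = Max ((\<lambda>i. \<bar>delta i\<bar>) ` {1..N})"

end

theory Submission
  imports Defs
begin

lemma Hmap_props:
  assumes inj: "inj_on U I" and x: "x \<in> I" and r: "U x + a \<in> U ` I"
  shows "Hmap U I a x \<in> I" "U (Hmap U I a x) = U x + a"
  using r inj by (auto simp: Hmap_def the_inv_into_into f_the_inv_into_f)

lemma Hmap_zero:
  assumes inj: "inj_on U I" and x: "x \<in> I"
  shows "Hmap U I 0 x = x"
  using inj x by (simp add: Hmap_def the_inv_into_f_f)

lemma Hmap_comp:
  assumes inj: "inj_on U I" and x: "x \<in> I" and r1: "U x + a \<in> U ` I" and r2: "U x + a + b \<in> U ` I"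
  shows "Hmap U I b (Hmap U I a x) = Hmap U I (a + b) x"
  using Hmap_props[OF inj x r1] by (simp add: Hmap_def add.assoc)


lemma fold_deliver:
  assumes inj: "inj_on U I"
  shows "distinct (map snd L) \<Longrightarrow>
    (\<And>i. i \<in> {1..N} \<Longrightarrow> {j \<in> Pre i. j \<in> snd ` set L} \<noteq> {} \<Longrightarrow> ph i \<in> I \<and>
        (\<forall>S \<subseteq> {j \<in> Pre i. j \<in> snd ` set L}. U (ph i) + (\<Sum>j\<in>S. eps i j) \<in> U ` I \<and> U (ph i) + (\<Sum>j\<in>S. eps i j) < 1))
    \<Longrightarrow> snd (fold (\<lambda>p acc. deliver U I N Pre eps tau te (snd p) acc) L (ph, out)) = out
      \<and> (\<forall>i\<in>{1..N}. fst (fold (\<lambda>p acc. deliver U I N Pre eps tau te (snd p) acc) L (ph, out)) i =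
           (if {j \<in> Pre i. j \<in> snd ` set L} = {} then ph i
            else Hmap U I (\<Sum>j\<in>{j \<in> Pre i. j \<in> snd ` set L}. eps i j) (ph i)))"
proof (induction L arbitrary: ph out)
  case Nil
  then show ?case by simp
next
  case (Cons p L)
  define j where "j = snd p"
  define ph' where "ph' = (\<lambda>i. if i \<in> {1..N} \<and> j \<in> Pre i then
               (if U (ph i) + eps i j < 1 then Hmap U I (eps i j) (ph i) else 0)
             else ph i)"
  have emp: "{i \<in> {1..N}. j \<in> Pre i \<and> \<not> (U (ph i) + eps i j < 1)} = {}"
  proof -
    { fix i assume i: "i \<in> {1..N}" "j \<in> Pre i"
      have ne: "{j \<in> Pre i. j \<in> snd ` set (p # L)} \<noteq> {}" using i j_def by auto
      have sub: "{j} \<subseteq> {j \<in> Pre i. j \<in> snd ` set (p # L)}" using i j_def by auto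
      have "U (ph i) + (\<Sum>j\<in>{j}. eps i j) < 1" using Cons.prems(2)[OF i(1) ne] sub by blast
      then have "U (ph i) + eps i j < 1" by simp }
    then show ?thesis by auto
  qed
  have del: "deliver U I N Pre eps tau te (snd p) (ph, out) = (ph', out)"
    unfolding deliver_def ph'_def j_def[symmetric] Let_def using emp by (simp only: fst_conv snd_conv) simp
  have jn: "j \<notin> snd ` set L" using Cons.prems(1) j_def by auto
  have BL: "\<And>i. {j' \<in> Pre i. j' \<in> snd ` set L} = {j' \<in> Pre i. j' \<in> snd ` set (p # L)} - {j}"
    using jn j_def by (auto simp: image_iff)
  have ph'1: "ph' i = Hmap U I (eps i j) (ph i) \<and> Hmap U I (eps i j) (ph i) \<in> I \<and> U (Hmap U I (eps i j) (ph i)) = U (ph i) + eps i j"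
    if i: "i \<in> {1..N}" "j \<in> Pre i" for i
  proof -
    have ne: "{j \<in> Pre i. j \<in> snd ` set (p # L)} \<noteq> {}" using i j_def by auto
    have sub: "{j} \<subseteq> {j \<in> Pre i. j \<in> snd ` set (p # L)}" using i j_def by auto
    have c0: "ph i \<in> I" "U (ph i) + (\<Sum>j\<in>{j}. eps i j) \<in> U ` I" "U (ph i) + (\<Sum>j\<in>{j}. eps i j) < 1"
      using Cons.prems(2)[OF i(1) ne] sub by blast+
    then have c: "ph i \<in> I" "U (ph i) + eps i j \<in> U ` I" "U (ph i) + eps i j < 1" by simp_all
    show ?thesis using Hmap_props[OF inj c(1,2)] c(3) i unfolding ph'_def by simp
  qed
  have ph'2: "ph' i = ph i" if "j \<notin> Pre i" for i using that unfolding ph'_def by auto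
  have IH: "snd (fold (\<lambda>p acc. deliver U I N Pre eps tau te (snd p) acc) L (ph', out)) = out
      \<and> (\<forall>i\<in>{1..N}. fst (fold (\<lambda>p acc. deliver U I N Pre eps tau te (snd p) acc) L (ph', out)) i =
           (if {j \<in> Pre i. j \<in> snd ` set L} = {} then ph' i
            else Hmap U I (\<Sum>j\<in>{j \<in> Pre i. j \<in> snd ` set L}. eps i j) (ph' i)))"
  proof (rule Cons.IH)
    show "distinct (map snd L)" using Cons.prems(1) by simp
  next
    fix i assume i: "i \<in> {1..N}" and ne: "{j \<in> Pre i. j \<in> snd ` set L} \<noteq> {}"
    have ne0: "{j \<in> Pre i. j \<in> snd ` set (p # L)} \<noteq> {}" using ne by auto
    note P = Cons.prems(2)[OF i ne0]
    show "ph' i \<in> I \<and>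
        (\<forall>S \<subseteq> {j \<in> Pre i. j \<in> snd ` set L}. U (ph' i) + (\<Sum>j\<in>S. eps i j) \<in> U ` I \<and> U (ph' i) + (\<Sum>j\<in>S. eps i j) < 1)"
    proof (cases "j \<in> Pre i")
      case True
      note q = ph'1[OF i True]
      show ?thesis
      proof (intro conjI allI impI)
        show "ph' i \<in> I" using q by simp
        fix S assume S: "S \<subseteq> {j \<in> Pre i. j \<in> snd ` set L}"
        have fS: "finite S" using S by (rule finite_subset) simp
        have jS: "j \<notin> S" using S jn by auto
        have sub: "insert j S \<subseteq> {j \<in> Pre i. j \<in> snd ` set (p # L)}" using S True j_def by auto
        have eq: "U (ph' i) + (\<Sum>j\<in>S. eps i j) = U (ph i) + (\<Sum>j\<in>insert j S. eps i j)"
          using q fS jS by (simp add: add.assoc)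
        show "U (ph' i) + (\<Sum>j\<in>S. eps i j) \<in> U ` I" "U (ph' i) + (\<Sum>j\<in>S. eps i j) < 1"
          unfolding eq using P sub by blast+
      qed
    next
      case False
      then show ?thesis using P ph'2[OF False] BL[of i] by auto
    qed
  qed
  have fold_eq: "fold (\<lambda>p acc. deliver U I N Pre eps tau te (snd p) acc) (p # L) (ph, out)
     = fold (\<lambda>p acc. deliver U I N Pre eps tau te (snd p) acc) L (ph', out)"
    using del by simp
  show ?case
  proof (rule conjI)
    show "snd (fold (\<lambda>p acc. deliver U I N Pre eps tau te (snd p) acc) (p # L) (ph, out)) = out"
      using IH fold_eq by simp
    show "\<forall>i\<in>{1..N}. fst (fold (\<lambda>p acc. deliver U I N Pre eps tau te (snd p) acc) (p # L) (ph, out)) i =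
           (if {j \<in> Pre i. j \<in> snd ` set (p # L)} = {} then ph i
            else Hmap U I (\<Sum>j\<in>{j \<in> Pre i. j \<in> snd ` set (p # L)}. eps i j) (ph i))"
    proof
      fix i assume i: "i \<in> {1..N}"
      show "fst (fold (\<lambda>p acc. deliver U I N Pre eps tau te (snd p) acc) (p # L) (ph, out)) i =
           (if {j \<in> Pre i. j \<in> snd ` set (p # L)} = {} then ph i
            else Hmap U I (\<Sum>j\<in>{j \<in> Pre i. j \<in> snd ` set (p # L)}. eps i j) (ph i))"
      proof (cases "j \<in> Pre i")
        case False
        then show ?thesis using IH i fold_eq ph'2[OF False] BL[of i] by auto
      next
        case True
        let ?B = "{j \<in> Pre i. j \<in> snd ` set (p # L)}"
        let ?B' = "{j \<in> Pre i. j \<in> snd ` set L}"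
        have ne0: "?B \<noteq> {}" using True j_def by auto
        note P = Cons.prems(2)[OF i ne0]
        note q = ph'1[OF i True]
        have fB: "finite ?B" by (rule finite_subset[of _ "snd ` set (p#L)"]) auto
        have jB: "j \<in> ?B" using True j_def by auto
        have sumB: "(\<Sum>j\<in>?B. eps i j) = eps i j + (\<Sum>j\<in>?B'. eps i j)"
          unfolding BL using sum.remove[OF fB jB] by simp
        show ?thesis
        proof (cases "?B' = {}")
          case True
          then have "?B = {j}" using BL[of i] jB by auto
          then show ?thesis using IH i fold_eq q True by auto
        next
          case False
          have r1: "U (ph i) + eps i j \<in> U ` I" using q by (metis imageI)
          have r2a: "U (ph i) + (\<Sum>j\<in>?B. eps i j) \<in> U ` I" using P by blast
          have r2: "U (ph i) + eps i j + (\<Sum>j\<in>?B'. eps i j) \<in> U ` I"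
            using r2a unfolding sumB by (simp only: add.assoc)
          have "fst (fold (\<lambda>p acc. deliver U I N Pre eps tau te (snd p) acc) (p # L) (ph, out)) i
               = Hmap U I (\<Sum>j\<in>?B'. eps i j) (Hmap U I (eps i j) (ph i))"
            using IH i fold_eq q False by auto
          also have "\<dots> = Hmap U I (\<Sum>j\<in>?B. eps i j) (ph i)"
            unfolding sumB using Hmap_comp[OF inj _ r1 r2] P by simp
          finally have calc: "fst (fold (\<lambda>p acc. deliver U I N Pre eps tau te (snd p) acc) (p # L) (ph, out)) i
               = Hmap U I (\<Sum>j\<in>?B. eps i j) (ph i)" .
          show ?thesis using calc by (simp only: ne0 if_False)
        qed
      qed
    qed
  qed
qed


lemma downclosed_eq:
  fixes S :: "nat set"
  assumes "S \<subseteq> {1..k}" "\<And>n m. 1 \<le> n \<Longrightarrow> n \<le> m \<Longrightarrow> m \<in> S \<Longrightarrow> n \<in> S"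
  shows "S = {1..card S}"
proof (cases "S = {}")
  case True then show ?thesis by simp
next
  case False
  have fin: "finite S" using assms(1) finite_subset by blast
  define M where "M = Max S"
  have M: "M \<in> S" using Max_in[OF fin False] M_def by simp
  have "S = {1..M}"
  proof
    show "S \<subseteq> {1..M}" using assms(1) Max_ge[OF fin] M_def by fastforce
    show "{1..M} \<subseteq> S" using assms(2) M by auto
  qed
  then show ?thesis by simp
qed


locale sim0 =
  fixes U :: "real \<Rightarrow> real" and I :: "real set" and N :: nat and Pre :: "nat \<Rightarrow> nat set"
    and eps :: "nat \<Rightarrow> nat \<Rightarrow> real" and tau theta Tend :: real and delta :: "nat \<Rightarrow> real"
    and Ord :: "nat \<Rightarrow> nat \<Rightarrow> nat"
begin

definition ff :: "nat \<Rightarrow> real" where "ff j = 1 - theta - delta j"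
definition arr :: "nat \<Rightarrow> nat \<Rightarrow> real" where "arr i n = ff (Ord i (max 1 n)) + tau"
fun psi :: "nat \<Rightarrow> nat \<Rightarrow> real" where
  "psi i 0 = tau + delta i - delta (Ord i 1)"
| "psi i (Suc n) = Hmap U I (eps i (Ord i (Suc n))) (psi i n + arr i (Suc n) - arr i n)"
definition cnt :: "nat \<Rightarrow> real \<Rightarrow> nat" where
  "cnt i t = card {n \<in> {1..card (Pre i)}. arr i n \<le> t}"
definition traj :: "nat \<Rightarrow> real \<Rightarrow> real" where
  "traj i t = (if t < ff i then theta + delta i + t else psi i (cnt i t) + t - arr i (cnt i t))"
definition EE :: "real set" where "EE = ff ` {1..N} \<union> (\<lambda>j. ff j + tau) ` {1..N}"
definition alast :: real where "alast = Max ((\<lambda>j. ff j + tau) ` {1..N})"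
definition inv :: "netstate \<Rightarrow> real \<Rightarrow> bool" where
  "inv s t \<longleftrightarrow> st_time s = t \<and> (\<forall>i\<in>{1..N}. st_ph s i = traj i t) \<and> distinct (st_pend s)
     \<and> set (st_pend s) = (\<lambda>j. (ff j + tau, j)) ` {j\<in>{1..N}. ff j \<le> t \<and> t < ff j + tau}"

end

locale sim = sim0 +
  assumes inj: "inj_on U I"
    and N1: "1 \<le> N"
    and Pre_sub: "\<And>i. i \<in> {1..N} \<Longrightarrow> Pre i \<subseteq> {1..N}"
    and Pre_ne: "\<And>i. i \<in> {1..N} \<Longrightarrow> Pre i \<noteq> {}"
    and bij: "\<And>i. i \<in> {1..N} \<Longrightarrow> bij_betw (Ord i) {1..card (Pre i)} (Pre i)"
    and sorted: "\<And>i n m. i \<in> {1..N} \<Longrightarrow> 1 \<le> n \<Longrightarrow> n \<le> m \<Longrightarrow> m \<le> card (Pre i) \<Longrightarrow> delta (Ord i m) \<le> delta (Ord i n)"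
    and gap: "\<And>i j. i \<in> {1..N} \<Longrightarrow> j \<in> {1..N} \<Longrightarrow> delta i - delta j < tau"
    and gap1: "\<And>i j. i \<in> {1..N} \<Longrightarrow> j \<in> {1..N} \<Longrightarrow> delta i - delta j < 1 - tau"
    and fpos: "\<And>i. i \<in> {1..N} \<Longrightarrow> theta + delta i < 1"
    and C1: "\<And>i n j l. i \<in> {1..N} \<Longrightarrow> 1 \<le> n \<Longrightarrow> n \<le> card (Pre i) \<Longrightarrow> j \<in> {1..N} \<Longrightarrow> l \<in> {1..N}
               \<Longrightarrow> psi i n + delta j - delta l < 1"
    and C4: "\<And>i m. i \<in> {1..N} \<Longrightarrow> m < card (Pre i) \<Longrightarrow>
               psi i m + arr i (Suc m) - arr i m \<in> I \<and>
               (\<forall>S \<subseteq> Pre i - Ord i ` {1..m}.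
                  U (psi i m + arr i (Suc m) - arr i m) + (\<Sum>j\<in>S. eps i j) \<in> U ` I \<and>
                  U (psi i m + arr i (Suc m) - arr i m) + (\<Sum>j\<in>S. eps i j) < 1)"
    and CT1: "alast < Tend"
    and CT2: "\<And>i. i \<in> {1..N} \<Longrightarrow> psi i (card (Pre i)) + Tend - arr i (card (Pre i)) < 1"
begin

lemma tau_pos: "0 < tau" using gap[of 1 1] N1 by auto

lemma finPre: "i \<in> {1..N} \<Longrightarrow> finite (Pre i)"
  using Pre_sub finite_subset by blast

lemma kpos: "i \<in> {1..N} \<Longrightarrow> 1 \<le> card (Pre i)"
  using Pre_ne finPre by (simp add: Suc_le_eq card_gt_0_iff)

lemma Ord_in: "i \<in> {1..N} \<Longrightarrow> n \<in> {1..card (Pre i)} \<Longrightarrow> Ord i n \<in> Pre i"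
  using bij bij_betwE by blast

lemma Ord_in2: "i \<in> {1..N} \<Longrightarrow> n \<in> {1..card (Pre i)} \<Longrightarrow> Ord i n \<in> {1..N}"
  using Ord_in Pre_sub by blast

lemma arr0: "arr i 0 = arr i 1" by (simp add: arr_def)

lemma arr_mono: "i \<in> {1..N} \<Longrightarrow> n \<le> m \<Longrightarrow> m \<le> card (Pre i) \<Longrightarrow> arr i n \<le> arr i m"
  using sorted[of i "max 1 n" "max 1 m"] kpos[of i] by (auto simp: arr_def ff_def max_def)

lemma cnt_iff:
  assumes i: "i \<in> {1..N}" and n: "n \<in> {1..card (Pre i)}"
  shows "arr i n \<le> t \<longleftrightarrow> n \<le> cnt i t"
proof -
  let ?S = "{n \<in> {1..card (Pre i)}. arr i n \<le> t}"
  have "?S = {1..card ?S}"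
    by (rule downclosed_eq[of _ "card (Pre i)"]) (use arr_mono[OF i] in fastforce)+
  then have "n \<in> ?S \<longleftrightarrow> n \<in> {1..cnt i t}" unfolding cnt_def by simp
  then show ?thesis using n by auto
qed

lemma cnt_le: "i \<in> {1..N} \<Longrightarrow> cnt i t \<le> card (Pre i)"
  unfolding cnt_def by (rule order_trans[OF card_mono[of "{1..card (Pre i)}"]]) auto

lemma psi0_traj: "psi i 0 + t - arr i 0 = t - ff i"
  by (simp add: arr_def ff_def)

lemma alast_ex: "\<exists>l\<in>{1..N}. alast = ff l + tau"
  unfolding alast_def using Max_in[of "(\<lambda>j. ff j + tau) ` {1..N}"] N1 by fastforce

lemma alast_ge: "j \<in> {1..N} \<Longrightarrow> ff j + tau \<le> alast"
  unfolding alast_def by (rule Max_ge) auto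

lemma alast_EE: "alast \<in> EE" using alast_ex EE_def by auto

lemma finEE: "finite EE" unfolding EE_def by simp

lemma ff_lt_arr: "i \<in> {1..N} \<Longrightarrow> j \<in> {1..N} \<Longrightarrow> ff i < ff j + tau"
  using gap[of j i] by (simp add: ff_def)

lemma fired_bound:
  assumes i: "i \<in> {1..N}" and t: "ff i \<le> t" "t \<le> alast"
  shows "alast < t + (1 - traj i t)"
proof -
  obtain l where l: "l \<in> {1..N}" "alast = ff l + tau" using alast_ex by blast
  have tr: "traj i t = psi i (cnt i t) + t - arr i (cnt i t)" using t by (simp add: traj_def)
  show ?thesis
  proof (cases "cnt i t = 0")
    case True
    then have "traj i t = t - ff i" using tr psi0_traj by simp
    then show ?thesis using gap1[OF i l(1)] l(2) by (simp add: ff_def)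
  next
    case False
    let ?m = "cnt i t"
    have m: "1 \<le> ?m" "?m \<le> card (Pre i)" using False cnt_le[OF i] by auto
    have o: "Ord i ?m \<in> {1..N}" using Ord_in2[OF i] m by auto
    have "psi i ?m + delta (Ord i ?m) - delta l < 1" using C1[OF i m o l(1)] .
    moreover have "arr i ?m = ff (Ord i ?m) + tau" using m by (simp add: arr_def max_def)
    ultimately show ?thesis using tr l(2) by (simp add: ff_def)
  qed
qed

lemma next_ev:
  assumes inv: "inv s t" and t: "t < alast"
    and te: "te \<in> EE" "t < te" "\<And>e. e \<in> EE \<Longrightarrow> t < e \<Longrightarrow> te \<le> e"
  shows "next_event N s = te"
proof -
  have time: "st_time s = t" and ph: "\<And>i. i \<in> {1..N} \<Longrightarrow> st_ph s i = traj i t"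
    and pend: "set (st_pend s) = (\<lambda>j. (ff j + tau, j)) ` {j\<in>{1..N}. ff j \<le> t \<and> t < ff j + tau}"
    using inv unfolding inv_def by auto
  define A where "A = (\<lambda>i. 1 - st_ph s i) ` {1..N}"
  have finA: "finite A" "A \<noteq> {}" using N1 unfolding A_def by auto
  have tele: "te \<le> alast" using te(3)[OF alast_EE t] .
  have Age: "te - t \<le> a" if aA: "a \<in> A" for a
  proof -
    obtain i where i: "i \<in> {1..N}" "a = 1 - st_ph s i" using aA unfolding A_def by blast
    show ?thesis
    proof (cases "t < ff i")
      case True
      then have "a = ff i - t" using i ph[OF i(1)] by (simp add: traj_def ff_def)
      moreover have "te \<le> ff i" using te(3)[of "ff i"] True i(1) by (auto simp: EE_def)
      ultimately show ?thesis by simp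
    next
      case False
      then show ?thesis using fired_bound[OF i(1), of t] t tele i ph[OF i(1)] by simp
    qed
  qed
  have Pge: "te \<le> b" if "b \<in> fst ` set (st_pend s)" for b
    using that pend te(3) by (auto simp: EE_def)
  have ne: "next_event N s = (let tf = t + Min A in if st_pend s = [] then tf else min tf (Min (fst ` set (st_pend s))))"
    unfolding next_event_def A_def time ..
  have ge: "te \<le> next_event N s"
  proof -
    have "te - t \<le> Min A" using Age finA by simp
    moreover have "st_pend s \<noteq> [] \<Longrightarrow> te \<le> Min (fst ` set (st_pend s))"
      using Pge by (simp add: Min_ge_iff)
    ultimately show ?thesis unfolding ne Let_def by auto
  qed
  have le: "next_event N s \<le> te"
  proof -
    from te(1) obtain j where j: "j \<in> {1..N}" "te = ff j \<or> te = ff j + tau" unfolding EE_def by auto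
    show ?thesis
    proof (cases "te = ff j")
      case True
      have "1 - st_ph s j \<in> A" using j A_def by auto
      then have "Min A \<le> 1 - st_ph s j" using finA by simp
      moreover have "st_ph s j = theta + delta j + t" using ph[OF j(1)] True te(2) by (simp add: traj_def)
      ultimately have "t + Min A \<le> te" using True by (simp add: ff_def)
      then show ?thesis unfolding ne Let_def by auto
    next
      case False
      then have te2: "te = ff j + tau" using j by auto
      have "ff j \<le> t"
      proof (rule ccontr)
        assume "\<not> ff j \<le> t"
        then have "te \<le> ff j" using te(3)[of "ff j"] j(1) by (auto simp: EE_def)
        then show False using te2 tau_pos by simp
      qed
      then have "(te, j) \<in> set (st_pend s)" using pend te2 te(2) j(1) by auto
      then have ne': "st_pend s \<noteq> []" and "Min (fst ` set (st_pend s)) \<le> te"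
        by (auto intro!: Min_le simp: rev_image_eqI)
      then show ?thesis unfolding ne Let_def by auto
    qed
  qed
  show ?thesis using ge le by simp
qed

end

context sim begin

lemma Ord_inj: "i \<in> {1..N} \<Longrightarrow> inj_on (Ord i) {1..card (Pre i)}"
  using bij bij_betw_imp_inj_on by blast

lemma Ord_surj: "i \<in> {1..N} \<Longrightarrow> Ord i ` {1..card (Pre i)} = Pre i"
  using bij bij_betw_imp_surj_on by blast

lemma sum_Ord:
  assumes i: "i \<in> {1..N}" and A: "A \<subseteq> {1..card (Pre i)}"
  shows "(\<Sum>j\<in>Ord i ` A. eps i j) = (\<Sum>n\<in>A. eps i (Ord i n))"
  using sum.reindex[OF inj_on_subset[OF Ord_inj[OF i] A]] by simp

lemma Ord_img_sub:
  assumes i: "i \<in> {1..N}" and A: "A \<subseteq> {Suc m..card (Pre i)}"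
  shows "Ord i ` A \<subseteq> Pre i - Ord i ` {1..m}"
proof
  fix x assume "x \<in> Ord i ` A"
  then obtain n where n: "n \<in> A" "x = Ord i n" by auto
  have "x \<in> Pre i" using Ord_in[OF i] n A by auto
  moreover have "x \<notin> Ord i ` {1..m}"
  proof
    assume "x \<in> Ord i ` {1..m}"
    then obtain n' where n': "n' \<in> {1..m}" "x = Ord i n'" by auto
    have nA: "Suc m \<le> n" "n \<le> card (Pre i)" using n(1) A by auto
    have n'A: "1 \<le> n'" "n' \<le> m" using n'(1) by auto
    have "n = n'"
      by (rule inj_onD[OF Ord_inj[OF i]]) (use n n' nA n'A in auto)
    then show False using nA n'A by simp
  qed
  ultimately show "x \<in> Pre i - Ord i ` {1..m}" by simp
qed

lemma psi_group:
  assumes i: "i \<in> {1..N}" and m: "m < card (Pre i)"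
    and eqs: "\<And>n. Suc m \<le> n \<Longrightarrow> n \<le> Suc m + d \<Longrightarrow> n \<le> card (Pre i) \<and> arr i n = arr i (Suc m)"
  shows "psi i (Suc m + d) = Hmap U I (\<Sum>n\<in>{Suc m..Suc m + d}. eps i (Ord i n)) (psi i m + arr i (Suc m) - arr i m)"
  using eqs
proof (induction d)
  case 0
  show ?case by (simp only: add_0_right psi.simps atLeastAtMost_singleton) simp
next
  case (Suc d)
  let ?x = "psi i m + arr i (Suc m) - arr i m"
  note c4 = C4[OF i m]
  have kb: "Suc m + Suc d \<le> card (Pre i)" using Suc.prems[of "Suc m + Suc d"] by simp
  have sub1: "Ord i ` {Suc m..Suc m + d} \<subseteq> Pre i - Ord i ` {1..m}"
    by (rule Ord_img_sub[OF i]) (use kb in auto)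
  have sub2: "Ord i ` {Suc m..Suc m + Suc d} \<subseteq> Pre i - Ord i ` {1..m}"
    by (rule Ord_img_sub[OF i]) (use kb in auto)
  have s1: "(\<Sum>j\<in>Ord i ` {Suc m..Suc m + d}. eps i j) = (\<Sum>n\<in>{Suc m..Suc m + d}. eps i (Ord i n))"
    by (rule sum_Ord[OF i]) (use kb in auto)
  have s2: "(\<Sum>j\<in>Ord i ` {Suc m..Suc m + Suc d}. eps i j) = (\<Sum>n\<in>{Suc m..Suc m + Suc d}. eps i (Ord i n))"
    by (rule sum_Ord[OF i]) (use kb in auto)
  have s3: "(\<Sum>n\<in>{Suc m..Suc m + Suc d}. eps i (Ord i n)) = (\<Sum>n\<in>{Suc m..Suc m + d}. eps i (Ord i n)) + eps i (Ord i (Suc (Suc m + d)))"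
    by simp
  have r1a: "U ?x + (\<Sum>j\<in>Ord i ` {Suc m..Suc m + d}. eps i j) \<in> U ` I"
    using c4 sub1 by blast
  have r1: "U ?x + (\<Sum>n\<in>{Suc m..Suc m + d}. eps i (Ord i n)) \<in> U ` I"
    using r1a unfolding s1 .
  have r2a: "U ?x + (\<Sum>j\<in>Ord i ` {Suc m..Suc m + Suc d}. eps i j) \<in> U ` I"
    using c4 sub2 by blast
  have r2: "U ?x + (\<Sum>n\<in>{Suc m..Suc m + d}. eps i (Ord i n)) + eps i (Ord i (Suc (Suc m + d))) \<in> U ` I"
    using r2a unfolding s2 s3 by (simp only: add.assoc)
  have IH: "psi i (Suc m + d) = Hmap U I (\<Sum>n\<in>{Suc m..Suc m + d}. eps i (Ord i n)) ?x"
  proof (rule Suc.IH)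
    fix n assume "Suc m \<le> n" "n \<le> Suc m + d"
    then show "n \<le> card (Pre i) \<and> arr i n = arr i (Suc m)" using Suc.prems[of n] by simp
  qed
  have a1: "arr i (Suc (Suc m + d)) = arr i (Suc m)" using Suc.prems[of "Suc (Suc m + d)"] by simp
  have a2: "arr i (Suc m + d) = arr i (Suc m)" using Suc.prems[of "Suc m + d"] by simp
  have a: "arr i (Suc (Suc m + d)) = arr i (Suc m + d)"
    using a1 a2 by simp
  have "psi i (Suc m + Suc d) = Hmap U I (eps i (Ord i (Suc (Suc m + d)))) (psi i (Suc m + d))"
    unfolding add_Suc_right psi.simps(2)[of i "Suc m + d"] a by simp
  also have "\<dots> = Hmap U I (\<Sum>n\<in>{Suc m..Suc m + Suc d}. eps i (Ord i n)) ?x"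
    unfolding IH s3 using Hmap_comp[OF inj _ r1 r2] c4 by simp
  finally show ?case .
qed

end

context sim begin

lemma step:
  assumes inv: "inv s t" and t: "t < alast"
    and te: "te \<in> EE" "t < te" "\<And>e. e \<in> EE \<Longrightarrow> t < e \<Longrightarrow> te \<le> e"
  shows "inv (net_step U I N Pre eps tau s) te"
proof -
  have time: "st_time s = t" and ph: "\<And>i. i \<in> {1..N} \<Longrightarrow> st_ph s i = traj i t"
    and pend: "set (st_pend s) = (\<lambda>j. (ff j + tau, j)) ` {j\<in>{1..N}. ff j \<le> t \<and> t < ff j + tau}"
    and dist: "distinct (st_pend s)"
    using inv unfolding inv_def by auto
  have ne: "next_event N s = te" using next_ev[OF inv t te] .
  have tele: "te \<le> alast" using te(3)[OF alast_EE t] .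
  have K1: "\<And>l. l \<in> {1..N} \<Longrightarrow> t < ff l \<Longrightarrow> te \<le> ff l" using te(3) by (auto simp: EE_def)
  have K2: "\<And>l. l \<in> {1..N} \<Longrightarrow> t < ff l + tau \<Longrightarrow> te \<le> ff l + tau" using te(3) by (auto simp: EE_def)
  define ph1 where "ph1 = (\<lambda>i. st_ph s i + (te - st_time s))"
  define F where "F = {i \<in> {1..N}. 1 \<le> ph1 i}"
  define ph2 where "ph2 = (\<lambda>i. if i \<in> F then 0 else ph1 i)"
  define fired where "fired = map (\<lambda>i. (te + tau, i)) (sorted_list_of_set F)"
  define arl where "arl = filter (\<lambda>p. fst p \<le> te) (st_pend s)"
  define rest where "rest = filter (\<lambda>p. \<not> fst p \<le> te) (st_pend s)"
  define r where "r = fold (\<lambda>p acc. deliver U I N Pre eps tau te (snd p) acc) arl (ph2, [])"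
  have ns: "net_step U I N Pre eps tau s = \<lparr>st_time = te, st_ph = fst r, st_pend = rest @ fired @ snd r\<rparr>"
    unfolding net_step_def Let_def ne by (simp only: ph1_def F_def ph2_def fired_def arl_def rest_def r_def)
  have ph1t: "ph1 i = traj i t + (te - t)" if "i \<in> {1..N}" for i
    using ph[OF that] time by (simp add: ph1_def)
  have F_eq: "F = {i \<in> {1..N}. ff i = te}"
  proof (rule set_eqI)
    fix i show "i \<in> F \<longleftrightarrow> i \<in> {i \<in> {1..N}. ff i = te}"
    proof (cases "i \<in> {1..N}")
      case False then show ?thesis by (auto simp: F_def)
    next
      case i: True
      show ?thesis
      proof (cases "t < ff i")
        case True
        have "ph1 i = theta + delta i + te" using ph1t[OF i] True by (simp add: traj_def)
        moreover have "te \<le> ff i" using K1[OF i True] .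
        ultimately show ?thesis using i by (auto simp: F_def ff_def)
      next
        case False
        have "ph1 i < 1" using ph1t[OF i] fired_bound[OF i, of t] False t tele by simp
        then show ?thesis using i False te(2) by (auto simp: F_def)
      qed
    qed
  qed
  have finF: "finite F" unfolding F_def by simp
  have arl_set: "set arl = (\<lambda>j. (ff j + tau, j)) ` {j\<in>{1..N}. ff j \<le> t \<and> ff j + tau = te}"
    unfolding arl_def using pend K2 te(2) by (force simp: image_iff)
  have rest_set: "set rest = (\<lambda>j. (ff j + tau, j)) ` {j\<in>{1..N}. ff j \<le> t \<and> te < ff j + tau}"
    unfolding rest_def using pend K2 te(2) by (force simp: image_iff)
  have inj_snd: "inj_on snd (set (st_pend s))" unfolding pend by (auto simp: inj_on_def)
  have dist_arl: "distinct (map snd arl)"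
    unfolding arl_def distinct_map using dist inj_snd by (auto intro: inj_on_subset)
  define B where "B = (\<lambda>i. {j \<in> Pre i. j \<in> snd ` set arl})"
  have B_eq: "B i = {j \<in> Pre i. ff j \<le> t \<and> ff j + tau = te}" if i: "i \<in> {1..N}" for i
    unfolding B_def arl_set using Pre_sub[OF i] by (auto simp: image_iff)
  have grp: "ff i \<le> t \<and> cnt i t < cnt i te \<and> ph2 i = psi i (cnt i t) + arr i (Suc (cnt i t)) - arr i (cnt i t)
      \<and> B i = Ord i ` {Suc (cnt i t)..cnt i te} \<and> (\<forall>n. Suc (cnt i t) \<le> n \<and> n \<le> cnt i te \<longrightarrow> n \<le> card (Pre i) \<and> arr i n = te)
      \<and> arr i (Suc (cnt i t)) = te"
    if i: "i \<in> {1..N}" and Bne: "B i \<noteq> {}" for i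
  proof -
    obtain j where j: "j \<in> Pre i" "ff j \<le> t" "ff j + tau = te" using Bne B_eq[OF i] by auto
    have jN: "j \<in> {1..N}" using Pre_sub[OF i] j(1) by auto
    have fi: "ff i \<le> t"
    proof (rule ccontr)
      assume "\<not> ff i \<le> t"
      then have "te \<le> ff i" using K1[OF i] by simp
      then show False using ff_lt_arr[OF i jN] j(3) by simp
    qed
    let ?m = "cnt i t" and ?m' = "cnt i te"
    have iF: "i \<notin> F" using F_eq fi te(2) by auto
    have ph2i: "ph2 i = psi i ?m + te - arr i ?m"
      using iF ph1t[OF i] fi by (simp add: ph2_def traj_def)
    obtain n where n: "n \<in> {1..card (Pre i)}" "Ord i n = j" using Ord_surj[OF i] j(1) by force
    have an: "arr i n = te" using n j(3) by (simp add: arr_def max_def)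
    have nm: "\<not> n \<le> ?m" using cnt_iff[OF i n(1), of t] an te(2) by simp
    have mk: "?m < card (Pre i)" using nm n by simp
    have sm: "Suc ?m \<in> {1..card (Pre i)}" using mk by simp
    have a1: "arr i (Suc ?m) \<le> te" using arr_mono[OF i, of "Suc ?m" n] nm n an by simp
    have a2: "t < arr i (Suc ?m)" using cnt_iff[OF i sm, of t] by simp
    have a3: "arr i (Suc ?m) = ff (Ord i (Suc ?m)) + tau" by (simp add: arr_def)
    have oN: "Ord i (Suc ?m) \<in> {1..N}" using Ord_in2[OF i sm] .
    have aeq: "arr i (Suc ?m) = te" using a1 a2 K2[OF oN] a3 by simp
    have mm': "Suc ?m \<le> ?m'" using cnt_iff[OF i sm, of te] aeq by simp
    have allte: "\<forall>n. Suc ?m \<le> n \<and> n \<le> ?m' \<longrightarrow> n \<le> card (Pre i) \<and> arr i n = te"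
    proof (intro allI impI)
      fix n' assume n': "Suc ?m \<le> n' \<and> n' \<le> ?m'"
      have nk: "n' \<le> card (Pre i)" using n' cnt_le[OF i, of te] by simp
      have "arr i n' \<le> te" using cnt_iff[OF i, of n' te] n' nk by simp
      moreover have "arr i (Suc ?m) \<le> arr i n'" using arr_mono[OF i] n' nk by simp
      ultimately show "n' \<le> card (Pre i) \<and> arr i n' = te" using nk aeq by simp
    qed
    have Beq: "B i = Ord i ` {Suc ?m..?m'}"
    proof
      show "B i \<subseteq> Ord i ` {Suc ?m..?m'}"
      proof
        fix x assume "x \<in> B i"
        then have x: "x \<in> Pre i" "ff x \<le> t" "ff x + tau = te" using B_eq[OF i] by auto
        obtain n' where n': "n' \<in> {1..card (Pre i)}" "Ord i n' = x" using Ord_surj[OF i] x(1) by force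
        have an': "arr i n' = te" using n' x(3) by (simp add: arr_def max_def)
        have "\<not> n' \<le> ?m" using cnt_iff[OF i n'(1), of t] an' te(2) by simp
        moreover have "n' \<le> ?m'" using cnt_iff[OF i n'(1), of te] an' by simp
        ultimately show "x \<in> Ord i ` {Suc ?m..?m'}" using n' by force
      qed
    next
      show "Ord i ` {Suc ?m..?m'} \<subseteq> B i"
      proof
        fix x assume "x \<in> Ord i ` {Suc ?m..?m'}"
        then obtain n' where n': "n' \<in> {Suc ?m..?m'}" "x = Ord i n'" by auto
        have nk: "n' \<in> {1..card (Pre i)}" using n' allte by auto
        have an': "arr i n' = te" using allte n' by auto
        have xP: "x \<in> Pre i" using Ord_in[OF i nk] n' by simp
        have xN: "x \<in> {1..N}" using Ord_in2[OF i nk] n' by simp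
        have fx: "ff x + tau = te" using an' n' nk by (simp add: arr_def max_def)
        have "ff x \<le> t"
        proof (rule ccontr)
          assume "\<not> ff x \<le> t"
          then have "te \<le> ff x" using K1[OF xN] by simp
          then show False using fx tau_pos by simp
        qed
        then show "x \<in> B i" using B_eq[OF i] xP fx by auto
      qed
    qed
    show ?thesis using fi mm' ph2i aeq Beq allte by simp
  qed
  have fold_res: "snd r = [] \<and> (\<forall>i\<in>{1..N}. fst r i = (if B i = {} then ph2 i else Hmap U I (\<Sum>j\<in>B i. eps i j) (ph2 i)))"
    unfolding r_def B_def
  proof (rule fold_deliver[OF inj dist_arl])
    fix i assume i: "i \<in> {1..N}" and Bne: "{j \<in> Pre i. j \<in> snd ` set arl} \<noteq> {}"
    have Bne': "B i \<noteq> {}" using Bne unfolding B_def .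
    note g = grp[OF i Bne']
    let ?m = "cnt i t"
    have mk: "?m < card (Pre i)" using g cnt_le[OF i, of te] by simp
    note c4 = C4[OF i mk]
    have Bsub: "B i \<subseteq> Pre i - Ord i ` {1..?m}"
      using g Ord_img_sub[OF i, of "{Suc ?m..cnt i te}" ?m] cnt_le[OF i, of te] by auto
    show "ph2 i \<in> I \<and> (\<forall>S\<subseteq>{j \<in> Pre i. j \<in> snd ` set arl}.
            U (ph2 i) + (\<Sum>j\<in>S. eps i j) \<in> U ` I \<and> U (ph2 i) + (\<Sum>j\<in>S. eps i j) < 1)"
      using c4 Bsub g unfolding B_def by auto
  qed
  have phases: "fst r i = traj i te" if i: "i \<in> {1..N}" for i
  proof (cases "B i = {}")
    case Be: True
    have fr: "fst r i = ph2 i" using fold_res i Be by simp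
    show ?thesis
    proof (cases "t < ff i")
      case True
      show ?thesis
      proof (cases "te < ff i")
        case True
        then have "i \<notin> F" using F_eq by auto
        then show ?thesis using fr ph1t[OF i] True \<open>t < ff i\<close> by (simp add: ph2_def traj_def)
      next
        case False
        then have fe: "ff i = te" using K1[OF i \<open>t < ff i\<close>] by simp
        then have "i \<in> F" using F_eq i by auto
        then have "ph2 i = 0" by (simp add: ph2_def)
        moreover have "cnt i te = 0"
        proof -
          have "{n \<in> {1..card (Pre i)}. arr i n \<le> te} = {}"
          proof -
            { fix n assume n: "n \<in> {1..card (Pre i)}" "arr i n \<le> te"
              have "arr i n = ff (Ord i n) + tau" using n by (simp add: arr_def max_def)
              then have False using ff_lt_arr[OF i Ord_in2[OF i n(1)]] fe n(2) by simp }
            then show ?thesis by auto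
          qed
          then show ?thesis by (simp add: cnt_def)
        qed
        ultimately show ?thesis using fr fe psi0_traj[of i te] by (simp add: traj_def)
      qed
    next
      case False
      then have fi: "ff i \<le> t" by simp
      have iF: "i \<notin> F" using F_eq fi te(2) by auto
      have ceq: "cnt i te = cnt i t"
      proof -
        have "{n \<in> {1..card (Pre i)}. arr i n \<le> te} = {n \<in> {1..card (Pre i)}. arr i n \<le> t}"
        proof (rule Collect_cong, rule iffI)
          fix n assume n: "n \<in> {1..card (Pre i)} \<and> arr i n \<le> te"
          show "n \<in> {1..card (Pre i)} \<and> arr i n \<le> t"
          proof (rule ccontr)
            assume "\<not> (n \<in> {1..card (Pre i)} \<and> arr i n \<le> t)"
            then have ant: "t < arr i n" using n by auto
            have nk: "n \<in> {1..card (Pre i)}" using n by simp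
            have ae: "arr i n = ff (Ord i n) + tau" using nk by (simp add: arr_def max_def)
            have oN: "Ord i n \<in> {1..N}" using Ord_in2[OF i nk] .
            have ate: "arr i n = te" using K2[OF oN] ant ae n by simp
            have "ff (Ord i n) \<le> t"
            proof (rule ccontr)
              assume "\<not> ff (Ord i n) \<le> t"
              then have "te \<le> ff (Ord i n)" using K1[OF oN] by simp
              then show False using ate ae tau_pos by simp
            qed
            then have "Ord i n \<in> B i" using B_eq[OF i] Ord_in[OF i nk] ate ae by simp
            then show False using Be by simp
          qed
        next
          fix n assume "n \<in> {1..card (Pre i)} \<and> arr i n \<le> t"
          then show "n \<in> {1..card (Pre i)} \<and> arr i n \<le> te" using te(2) by simp
        qed
        then show ?thesis by (simp add: cnt_def)
      qed
      show ?thesis using fr iF ph1t[OF i] fi te(2) ceq by (simp add: ph2_def traj_def)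
    qed
  next
    case Bne: False
    note g = grp[OF i Bne]
    let ?m = "cnt i t" and ?m' = "cnt i te"
    have mk: "?m < card (Pre i)" using g cnt_le[OF i, of te] by simp
    have fr: "fst r i = Hmap U I (\<Sum>j\<in>B i. eps i j) (ph2 i)" using fold_res i Bne by simp
    have sB: "(\<Sum>j\<in>B i. eps i j) = (\<Sum>n\<in>{Suc ?m..Suc ?m + (?m' - Suc ?m)}. eps i (Ord i n))"
    proof -
      have "Suc ?m + (?m' - Suc ?m) = ?m'" using g by simp
      moreover have "(\<Sum>j\<in>B i. eps i j) = (\<Sum>n\<in>{Suc ?m..?m'}. eps i (Ord i n))"
        using g sum_Ord[OF i, of "{Suc ?m..?m'}"] cnt_le[OF i, of te] by auto
      ultimately show ?thesis by simp
    qed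
    have pg: "psi i (Suc ?m + (?m' - Suc ?m)) = Hmap U I (\<Sum>n\<in>{Suc ?m..Suc ?m + (?m' - Suc ?m)}. eps i (Ord i n)) (psi i ?m + arr i (Suc ?m) - arr i ?m)"
    proof (rule psi_group[OF i mk])
      fix n assume "Suc ?m \<le> n" "n \<le> Suc ?m + (?m' - Suc ?m)"
      then show "n \<le> card (Pre i) \<and> arr i n = arr i (Suc ?m)" using g by auto
    qed
    have e1: "Suc ?m + (?m' - Suc ?m) = ?m'" using g by simp
    have am': "arr i ?m' = te" using g by auto
    have "fst r i = psi i ?m'" using fr sB pg g e1 by simp
    moreover have "traj i te = psi i ?m'" using g te(2) am' by (simp add: traj_def)
    ultimately show ?thesis by simp
  qed
  have fired_set: "set fired = (\<lambda>j. (ff j + tau, j)) ` {j\<in>{1..N}. ff j = te}"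
    unfolding fired_def using finF F_eq by auto
  have newpend: "set (rest @ fired @ snd r) = (\<lambda>j. (ff j + tau, j)) ` {j\<in>{1..N}. ff j \<le> te \<and> te < ff j + tau}"
  proof -
    have "{j\<in>{1..N}. ff j \<le> te \<and> te < ff j + tau} = {j\<in>{1..N}. ff j \<le> t \<and> te < ff j + tau} \<union> {j\<in>{1..N}. ff j = te}"
    proof (rule set_eqI, rule iffI)
      fix j assume j: "j \<in> {j\<in>{1..N}. ff j \<le> te \<and> te < ff j + tau}"
      show "j \<in> {j\<in>{1..N}. ff j \<le> t \<and> te < ff j + tau} \<union> {j\<in>{1..N}. ff j = te}"
      proof (cases "ff j \<le> t")
        case True then show ?thesis using j by auto
      next
        case False then show ?thesis using j K1[of j] by force
      qed
    next
      fix j assume "j \<in> {j\<in>{1..N}. ff j \<le> t \<and> te < ff j + tau} \<union> {j\<in>{1..N}. ff j = te}"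
      then show "j \<in> {j\<in>{1..N}. ff j \<le> te \<and> te < ff j + tau}" using te(2) tau_pos by auto
    qed
    then show ?thesis using rest_set fired_set fold_res by auto
  qed
  have newdist: "distinct (rest @ fired @ snd r)"
  proof -
    have d1: "distinct rest" unfolding rest_def using dist by simp
    have d2: "distinct fired" unfolding fired_def by (simp add: distinct_map inj_on_def)
    have d3: "set rest \<inter> set fired = {}" using rest_set fired_set te(2) by auto
    show ?thesis using d1 d2 d3 fold_res by simp
  qed
  show ?thesis unfolding inv_def ns using phases newpend newdist by simp
qed

end

context sim begin

lemma init_inv: "inv (init_state theta delta) 0"
proof -
  have h: "delta i < 1 - theta" if "1 \<le> i" "i \<le> N" for i using fpos[of i] that by simp
  then show ?thesis unfolding inv_def init_state_def
    by (auto simp: traj_def ff_def) (meson h not_less)+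
qed

lemma te_exists:
  assumes "t < alast"
  shows "\<exists>te. te \<in> EE \<and> t < te \<and> (\<forall>e\<in>EE. t < e \<longrightarrow> te \<le> e)"
proof -
  let ?A = "{e \<in> EE. t < e}"
  have fin: "finite ?A" using finEE by simp
  have ne: "?A \<noteq> {}" using alast_EE assms by auto
  show ?thesis using Min_in[OF fin ne] Min_le[OF fin] by (intro exI[of _ "Min ?A"]) auto
qed

lemma reach:
  "inv s t \<Longrightarrow> t \<le> alast \<Longrightarrow> \<exists>n0. inv ((net_step U I N Pre eps tau ^^ n0) s) alast
     \<and> (\<forall>n<n0. \<exists>t'. inv ((net_step U I N Pre eps tau ^^ n) s) t' \<and> t' < alast)"
proof (induction "card {e \<in> EE. t < e}" arbitrary: s t rule: less_induct)
  case less
  show ?case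
  proof (cases "t = alast")
    case True
    then show ?thesis using less.prems by (intro exI[of _ 0]) auto
  next
    case False
    then have t: "t < alast" using less.prems by simp
    obtain te where te: "te \<in> EE" "t < te" "\<And>e. e \<in> EE \<Longrightarrow> t < e \<Longrightarrow> te \<le> e"
      using te_exists[OF t] by blast
    have inv': "inv (net_step U I N Pre eps tau s) te" using step[OF less.prems(1) t te] .
    have tele: "te \<le> alast" using te(3)[OF alast_EE t] .
    have lt: "card {e \<in> EE. te < e} < card {e \<in> EE. t < e}"
    proof (rule psubset_card_mono)
      show "finite {e \<in> EE. t < e}" using finEE by simp
      show "{e \<in> EE. te < e} \<subset> {e \<in> EE. t < e}" using te by auto
    qed
    obtain n0 where n0: "inv ((net_step U I N Pre eps tau ^^ n0) (net_step U I N Pre eps tau s)) alast"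
      "\<forall>n<n0. \<exists>t'. inv ((net_step U I N Pre eps tau ^^ n) (net_step U I N Pre eps tau s)) t' \<and> t' < alast"
      using less.hyps[OF lt inv' tele] by blast
    show ?thesis
    proof (intro exI[of _ "Suc n0"] conjI allI impI)
      show "inv ((net_step U I N Pre eps tau ^^ Suc n0) s) alast" using n0(1) by (simp only: funpow_Suc_right comp_apply)
      fix n assume n: "n < Suc n0"
      show "\<exists>t'. inv ((net_step U I N Pre eps tau ^^ n) s) t' \<and> t' < alast"
      proof (cases n)
        case 0 then show ?thesis using less.prems(1) t by auto
      next
        case (Suc n')
        have "n' < n0" using n Suc by simp
        then show ?thesis using n0(2) unfolding Suc by (simp only: funpow_Suc_right comp_apply)
      qed
    qed
  qed
qed

lemma final:
  assumes inv: "inv s alast"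
  shows "Tend < next_event N s"
    "\<And>i. i \<in> {1..N} \<Longrightarrow> st_ph s i + (Tend - st_time s) = psi i (card (Pre i)) + Tend - arr i (card (Pre i))"
proof -
  have time: "st_time s = alast" and ph: "\<And>i. i \<in> {1..N} \<Longrightarrow> st_ph s i = traj i alast"
    and pend: "set (st_pend s) = (\<lambda>j. (ff j + tau, j)) ` {j\<in>{1..N}. ff j \<le> alast \<and> alast < ff j + tau}"
    using inv unfolding inv_def by auto
  have "{j\<in>{1..N}. ff j \<le> alast \<and> alast < ff j + tau} = {}"
  proof -
    { fix j assume j: "j \<in> {1..N}" "alast < ff j + tau"
      have False using alast_ge[OF j(1)] j(2) by simp }
    then show ?thesis by blast
  qed
  then have "set (st_pend s) = {}" unfolding pend by (simp only: image_empty)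
  then have pe: "st_pend s = []" by simp
  have tr: "traj i alast = psi i (card (Pre i)) + alast - arr i (card (Pre i))" if i: "i \<in> {1..N}" for i
  proof -
    have fi: "\<not> alast < ff i" using alast_ge[OF i] tau_pos by simp
    have "arr i n \<le> alast" if n: "n \<in> {1..card (Pre i)}" for n
      using alast_ge[OF Ord_in2[OF i n]] n by (simp add: arr_def max_def)
    then have "{n \<in> {1..card (Pre i)}. arr i n \<le> alast} = {1..card (Pre i)}"
      by blast
    then have "cnt i alast = card (Pre i)" by (simp add: cnt_def)
    then show ?thesis using fi by (simp add: traj_def)
  qed
  show "\<And>i. i \<in> {1..N} \<Longrightarrow> st_ph s i + (Tend - st_time s) = psi i (card (Pre i)) + Tend - arr i (card (Pre i))"
    using ph tr time by simp
  define A where "A = (\<lambda>i. 1 - st_ph s i) ` {1..N}"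
  have finA: "finite A" "A \<noteq> {}" using N1 unfolding A_def by auto
  have "Tend - alast < Min A"
  proof (subst Min_gr_iff[OF finA], intro ballI)
    fix a assume "a \<in> A"
    then obtain i where i: "i \<in> {1..N}" "a = 1 - st_ph s i" unfolding A_def by blast
    show "Tend - alast < a" using i ph[OF i(1)] tr[OF i(1)] CT2[OF i(1)] by simp
  qed
  then show "Tend < next_event N s" unfolding next_event_def Let_def pe time A_def by simp
qed

lemma phases_final:
  assumes i: "i \<in> {1..N}"
  shows "phases_at U I N Pre eps tau (init_state theta delta) Tend i = psi i (card (Pre i)) + Tend - arr i (card (Pre i))"
proof -
  have a0: "0 \<le> alast" using alast_ex fpos tau_pos by (force simp: ff_def)
  obtain n0 where n0: "inv ((net_step U I N Pre eps tau ^^ n0) (init_state theta delta)) alast"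
      "\<forall>n<n0. \<exists>t'. inv ((net_step U I N Pre eps tau ^^ n) (init_state theta delta)) t' \<and> t' < alast"
    using reach[OF init_inv a0] by blast
  have L: "(LEAST n. Tend < next_event N ((net_step U I N Pre eps tau ^^ n) (init_state theta delta))) = n0"
  proof (rule Least_equality)
    show "Tend < next_event N ((net_step U I N Pre eps tau ^^ n0) (init_state theta delta))"
      using final(1)[OF n0(1)] .
    fix n assume n: "Tend < next_event N ((net_step U I N Pre eps tau ^^ n) (init_state theta delta))"
    show "n0 \<le> n"
    proof (rule ccontr)
      assume "\<not> n0 \<le> n"
      then have "n < n0" by simp
      then have "\<exists>t'. inv ((net_step U I N Pre eps tau ^^ n) (init_state theta delta)) t' \<and> t' < alast"
        using n0(2) by blast
      then obtain t' where t': "inv ((net_step U I N Pre eps tau ^^ n) (init_state theta delta)) t'" "t' < alast"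
        by blast
      obtain te where te: "te \<in> EE" "t' < te" "\<And>e. e \<in> EE \<Longrightarrow> t' < e \<Longrightarrow> te \<le> e"
        using te_exists[OF t'(2)] by blast
      have "next_event N ((net_step U I N Pre eps tau ^^ n) (init_state theta delta)) = te"
        using next_ev[OF t' te] .
      moreover have "te \<le> alast" using te(3)[OF alast_EE t'(2)] .
      ultimately show False using n CT1 by simp
    qed
  qed
  show ?thesis unfolding phases_at_def Let_def L using final(2)[OF n0(1) i] by simp
qed

end

lemma mono_U:
  fixes U U' :: "real \<Rightarrow> real"
  assumes Iint: "is_interval I" and der: "\<And>x. x \<in> I \<Longrightarrow> (U has_real_derivative U' x) (at x)"
    and pos: "\<And>x. x \<in> I \<Longrightarrow> 0 < U' x"
    and x: "x \<in> I" and z: "z \<in> I" and xz: "x < z"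
  shows "U x < U z"
proof -
  have "\<And>s. x \<le> s \<Longrightarrow> s \<le> z \<Longrightarrow> s \<in> I" using mem_is_interval_1_I[OF Iint x z] by blast
  then obtain c where c: "x < c" "c < z" "U z - U x = (z - x) * U' c"
    using MVT2[OF xz, of U U'] der by blast
  have "c \<in> I" using c \<open>\<And>s. x \<le> s \<Longrightarrow> s \<le> z \<Longrightarrow> s \<in> I\<close> by simp
  then have "0 < (z - x) * U' c" using pos xz by simp
  then show ?thesis using c by simp
qed

locale Kloc =
  fixes U U' U'' :: "real \<Rightarrow> real" and I :: "real set" and a b m0 M1 M2 :: real
  assumes Ider: "\<And>x. x \<in> I \<Longrightarrow> (U has_real_derivative U' x) (at x)"
    and I'der: "\<And>x. x \<in> I \<Longrightarrow> (U' has_real_derivative U'' x) (at x)"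
    and Iint: "is_interval I"
    and Ipos: "\<And>x. x \<in> I \<Longrightarrow> 0 < U' x"
    and KI: "{a..b} \<subseteq> I"
    and m0: "0 < m0" and bnds: "\<And>x. x \<in> {a..b} \<Longrightarrow> m0 \<le> U' x \<and> U' x \<le> M1 \<and> \<bar>U'' x\<bar> \<le> M2"
begin

lemma M1m0: "a \<le> b \<Longrightarrow> m0 \<le> M1" using bnds[of a] by auto

lemma lipU_lt:
  assumes x: "x \<in> {a..b}" and z: "z \<in> {a..b}" and xz: "x < z"
  shows "U z - U x \<le> M1 * (z - x) \<and> m0 * (z - x) \<le> U z - U x"
proof -
  have "\<And>s. x \<le> s \<Longrightarrow> s \<le> z \<Longrightarrow> s \<in> {a..b}" using x z by auto
  then obtain c where c: "x < c" "c < z" "U z - U x = (z - x) * U' c" "c \<in> {a..b}"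
    using MVT2[OF xz, of U U'] Ider KI x z by (metis atLeastAtMost_iff less_imp_le subsetD)
  have "m0 \<le> U' c" "U' c \<le> M1" using bnds[OF c(4)] by auto
  then show ?thesis using c(3) xz by (simp add: mult_left_mono mult.commute)
qed

lemma lipU:
  assumes x: "x \<in> {a..b}" and z: "z \<in> {a..b}"
  shows "\<bar>U z - U x\<bar> \<le> M1 * \<bar>z - x\<bar> \<and> m0 * \<bar>z - x\<bar> \<le> \<bar>U z - U x\<bar>"
proof (cases x z rule: linorder_cases)
  case less
  have "0 < m0 * (z - x)" using m0 less by simp
  then show ?thesis using lipU_lt[OF x z less] less by auto
next
  case equal then show ?thesis by simp
next
  case greater
  have "0 < m0 * (x - z)" using m0 greater by simp
  then show ?thesis using lipU_lt[OF z x greater] greater by auto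
qed

lemma lipU'_lt:
  assumes x: "x \<in> {a..b}" and z: "z \<in> {a..b}" and xz: "x < z"
  shows "\<bar>U' z - U' x\<bar> \<le> M2 * (z - x)"
proof -
  have "\<And>s. x \<le> s \<Longrightarrow> s \<le> z \<Longrightarrow> s \<in> {a..b}" using x z by auto
  then obtain c where c: "x < c" "c < z" "U' z - U' x = (z - x) * U'' c" "c \<in> {a..b}"
    using MVT2[OF xz, of U' U''] I'der KI x z by (metis atLeastAtMost_iff less_imp_le subsetD)
  have "\<bar>U'' c\<bar> \<le> M2" using bnds[OF c(4)] by auto
  then have "\<bar>(z - x) * U'' c\<bar> \<le> (z - x) * M2" using xz by (simp add: abs_mult mult_left_mono)
  then show ?thesis using c(3) by (simp add: mult.commute)
qed

lemma lipU':
  assumes x: "x \<in> {a..b}" and z: "z \<in> {a..b}"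
  shows "\<bar>U' z - U' x\<bar> \<le> M2 * \<bar>z - x\<bar>"
proof (cases x z rule: linorder_cases)
  case less
  then show ?thesis using lipU'_lt[OF x z less] by auto
next
  case equal then show ?thesis by simp
next
  case greater
  then show ?thesis using lipU'_lt[OF z x greater] by (auto simp: abs_minus_commute)
qed

lemma taylor_lt:
  assumes x: "x \<in> {a..b}" and z: "z \<in> {a..b}" and xz: "x \<noteq> z"
  shows "\<bar>U z - U x - U' x * (z - x)\<bar> \<le> M2 * (z - x)\<^sup>2"
proof -
  define g where "g = (\<lambda>s. U s - U' x * s)"
  define lo where "lo = min x z"
  define hi where "hi = max x z"
  have lohi: "lo < hi" "lo \<in> {a..b}" "hi \<in> {a..b}" using xz x z by (auto simp: lo_def hi_def)
  have der: "DERIV g s :> U' s - U' x" if "lo \<le> s" "s \<le> hi" for s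
  proof -
    have "s \<in> I" using that lohi KI by auto
    then show ?thesis unfolding g_def by (auto intro!: derivative_eq_intros Ider)
  qed
  obtain c where c: "lo < c" "c < hi" "g hi - g lo = (hi - lo) * (U' c - U' x)"
    using MVT2[OF lohi(1) der] by blast
  have cK: "c \<in> {a..b}" using c lohi by auto
  have "\<bar>U' c - U' x\<bar> \<le> M2 * \<bar>c - x\<bar>" using lipU'[OF x cK] .
  moreover have "\<bar>c - x\<bar> \<le> \<bar>z - x\<bar>" using c by (auto simp: lo_def hi_def)
  moreover have "0 \<le> M2" using bnds[OF x] by auto
  ultimately have b1: "\<bar>U' c - U' x\<bar> \<le> M2 * \<bar>z - x\<bar>" by (meson mult_left_mono order_trans)
  have "\<bar>g z - g x\<bar> = \<bar>z - x\<bar> * \<bar>U' c - U' x\<bar>"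
  proof (cases "x < z")
    case True
    then show ?thesis using c(3) by (simp add: lo_def hi_def abs_mult)
  next
    case False
    then have "z < x" using xz by simp
    then show ?thesis using c(3) by (simp add: lo_def hi_def abs_mult abs_minus_commute)
  qed
  also have "\<dots> \<le> \<bar>z - x\<bar> * (M2 * \<bar>z - x\<bar>)" using b1 by (simp add: mult_left_mono)
  also have "\<dots> = M2 * (z - x)\<^sup>2" by (simp add: power2_eq_square abs_mult_self_eq)
  finally show ?thesis unfolding g_def by (simp add: algebra_simps)
qed

lemma taylor:
  assumes x: "x \<in> {a..b}" and z: "z \<in> {a..b}"
  shows "\<bar>U z - U x - U' x * (z - x)\<bar> \<le> M2 * (z - x)\<^sup>2"
  using taylor_lt[OF x z] by (cases "x = z") auto

lemma margin:
  assumes y: "y - r \<in> {a..b}" "y + r \<in> {a..b}" and r: "0 < r" and v: "\<bar>v - U y\<bar> \<le> m0 * r"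
  shows "v \<in> U ` I"
proof -
  have yK: "y \<in> {a..b}" using y r by auto
  have l1: "m0 * r \<le> U (y + r) - U y" using lipU_lt[OF yK y(2)] r by simp
  have l2: "m0 * r \<le> U y - U (y - r)" using lipU_lt[OF y(1) yK] r by simp
  have "continuous_on {y - r..y + r} U"
  proof (rule DERIV_continuous_on[of _ _ U'])
    fix s assume "s \<in> {y - r..y + r}"
    then have "s \<in> I" using KI y by auto
    then show "(U has_real_derivative U' s) (at s within {y - r..y + r})"
      using Ider has_field_derivative_at_within by blast
  qed
  moreover have "U (y - r) \<le> v" "v \<le> U (y + r)" using l1 l2 v by (auto simp: abs_le_iff)
  ultimately obtain x where x: "y - r \<le> x" "x \<le> y + r" "U x = v"
    using IVT'[of U "y - r" v "y + r"] r by auto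
  have "x \<in> I" using x y KI by auto
  then show ?thesis using x by auto
qed

lemma margin2:
  assumes y: "y - r \<in> {a..b}" "y + r \<in> {a..b}" and r: "0 < r" and w: "w \<in> I"
    and v: "\<bar>U w - U y\<bar> < m0 * r"
  shows "\<bar>w - y\<bar> < r"
proof (rule ccontr)
  have yK: "y \<in> {a..b}" using y r by auto
  assume "\<not> \<bar>w - y\<bar> < r"
  then have "y + r \<le> w \<or> w \<le> y - r" by auto
  then show False
  proof
    assume h: "y + r \<le> w"
    have l1: "m0 * r \<le> U (y + r) - U y" using lipU_lt[OF yK y(2)] r by simp
    have "U (y + r) \<le> U w" using mono_U[OF Iint Ider Ipos, of "y + r" w] h w y KI
      by (cases "y + r = w") auto
    then show False using l1 v by simp
  next
    assume h: "w \<le> y - r"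
    have l2: "m0 * r \<le> U y - U (y - r)" using lipU_lt[OF y(1) yK] r by simp
    have "U w \<le> U (y - r)" using mono_U[OF Iint Ider Ipos, of w "y - r"] h w y KI
      by (cases "y - r = w") auto
    then show False using l2 v by simp
  qed
qed

end

context Kloc begin

definition qq :: real where "qq = M1 / m0"
definition cc :: real where "cc = (M2 + M2 * qq\<^sup>2) / m0"

fun Bc :: "nat \<Rightarrow> real" where
  "Bc 0 = 2"
| "Bc (Suc n) = qq * (Bc n + 2)"

fun Cc :: "nat \<Rightarrow> real" where
  "Cc 0 = 0"
| "Cc (Suc n) = qq * Cc n + cc * (Bc n + 2)\<^sup>2"

lemma qq_ge1: "a \<le> b \<Longrightarrow> 1 \<le> qq"
  using M1m0 m0 by (simp add: qq_def)

lemma M2_nn: "a \<le> b \<Longrightarrow> 0 \<le> M2"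
  using bnds[of a] by auto

lemma cc_nn: "a \<le> b \<Longrightarrow> 0 \<le> cc"
  using M2_nn m0 by (simp add: cc_def)

lemma Bc_nn: "a \<le> b \<Longrightarrow> 0 \<le> Bc n"
  by (induction n) (use qq_ge1 in auto)

lemma Bc_mono: assumes ab: "a \<le> b" shows "n \<le> m \<Longrightarrow> Bc n \<le> Bc m"
proof (induction m)
  case 0 then show ?case by simp
next
  case (Suc m)
  have "Bc m \<le> Bc (Suc m)"
  proof -
    have "Bc m + 2 \<le> qq * (Bc m + 2)" using qq_ge1[OF ab] Bc_nn[OF ab, of m]
      by (simp add: mult_le_cancel_right1)
    then show ?thesis by simp
  qed
  then show ?case using Suc by (cases "n = Suc m") auto
qed

lemma Cc_nn: "a \<le> b \<Longrightarrow> 0 \<le> Cc n"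
  by (induction n) (use qq_ge1 cc_nn in auto)

lemma Cc_mono: assumes ab: "a \<le> b" shows "n \<le> m \<Longrightarrow> Cc n \<le> Cc m"
proof (induction m)
  case 0 then show ?case by simp
next
  case (Suc m)
  have "Cc m \<le> Cc (Suc m)"
  proof -
    have "Cc m \<le> qq * Cc m" using qq_ge1[OF ab] Cc_nn[OF ab, of m]
      by (simp add: mult_le_cancel_right1)
    moreover have "0 \<le> cc * (Bc m + 2)\<^sup>2" using cc_nn[OF ab] by simp
    ultimately show ?thesis by simp
  qed
  then show ?case using Suc by (cases "n = Suc m") auto
qed

lemma hstep:
  assumes yK: "y \<in> {a..b}" and yx: "y + x \<in> {a..b}" and hy: "hy \<in> {a..b}" and w: "w \<in> {a..b}"
    and Uhy: "U hy = U y + e" and Uw: "U w = U (y + x) + e"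
  shows "\<bar>w - hy\<bar> \<le> qq * \<bar>x\<bar>" "\<bar>w - hy - (U' y / U' hy) * x\<bar> \<le> cc * x\<^sup>2"
proof -
  have dU: "U w - U hy = U (y + x) - U y" using Uhy Uw by simp
  have l1: "m0 * \<bar>w - hy\<bar> \<le> \<bar>U w - U hy\<bar>" using lipU[OF hy w] by simp
  have l2: "\<bar>U (y + x) - U y\<bar> \<le> M1 * \<bar>x\<bar>" using lipU[OF yK yx] by simp
  have "m0 * \<bar>w - hy\<bar> \<le> M1 * \<bar>x\<bar>" using l1 l2 dU by simp
  then show B: "\<bar>w - hy\<bar> \<le> qq * \<bar>x\<bar>" using m0 unfolding qq_def
    by (simp add: pos_le_divide_eq mult.commute)
  have T1: "\<bar>U w - U hy - U' hy * (w - hy)\<bar> \<le> M2 * (w - hy)\<^sup>2" using taylor[OF hy w] .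
  have T2: "\<bar>U (y + x) - U y - U' y * x\<bar> \<le> M2 * x\<^sup>2" using taylor[OF yK yx] by simp
  have ab: "a \<le> b" using yK by simp
  have sq: "(w - hy)\<^sup>2 \<le> qq\<^sup>2 * x\<^sup>2"
  proof -
    have "\<bar>w - hy\<bar>\<^sup>2 \<le> (qq * \<bar>x\<bar>)\<^sup>2" using power_mono[OF B, of 2] by simp
    then show ?thesis by (simp add: power_mult_distrib)
  qed
  have "\<bar>U' hy * (w - hy) - U' y * x\<bar> \<le> M2 * (w - hy)\<^sup>2 + M2 * x\<^sup>2"
    using T1 T2 dU by (smt (verit))
  also have "\<dots> \<le> M2 * (qq\<^sup>2 * x\<^sup>2) + M2 * x\<^sup>2"
    using sq M2_nn[OF ab] by (simp add: mult_left_mono)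
  also have "\<dots> = (M2 + M2 * qq\<^sup>2) * x\<^sup>2" by (simp add: algebra_simps)
  finally have N: "\<bar>U' hy * (w - hy) - U' y * x\<bar> \<le> (M2 + M2 * qq\<^sup>2) * x\<^sup>2" .
  have pos: "m0 \<le> U' hy" using bnds[OF hy] by simp
  then have hp: "0 < U' hy" using m0 by simp
  have eq: "w - hy - (U' y / U' hy) * x = (U' hy * (w - hy) - U' y * x) / U' hy"
    using hp by (simp add: field_simps)
  have "\<bar>w - hy - (U' y / U' hy) * x\<bar> = \<bar>U' hy * (w - hy) - U' y * x\<bar> / U' hy"
    unfolding eq using hp by simp
  also have "\<dots> \<le> \<bar>U' hy * (w - hy) - U' y * x\<bar> / m0"
    using pos m0 by (simp add: divide_left_mono)
  also have "\<dots> \<le> (M2 + M2 * qq\<^sup>2) * x\<^sup>2 / m0"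
    using N m0 by (simp add: divide_right_mono)
  finally show "\<bar>w - hy - (U' y / U' hy) * x\<bar> \<le> cc * x\<^sup>2" by (simp add: cc_def)
qed

end

context Kloc begin

lemma err:
  fixes psi y Lam d e :: "nat \<Rightarrow> real" and k :: nat and rho eps0 :: real
  assumes inj: "inj_on U I"
    and yK: "\<And>n. n \<le> k \<Longrightarrow> y n - 2 * rho \<in> {a..b} \<and> y n + 2 * rho \<in> {a..b}"
    and yU: "\<And>n. n < k \<Longrightarrow> U (y (Suc n)) = U (y n) + e (Suc n)"
    and psiS: "\<And>n. n < k \<Longrightarrow> psi (Suc n) = Hmap U I (e (Suc n)) (psi n + d n - d (Suc n))"
    and LamS: "\<And>n. n < k \<Longrightarrow> Lam (Suc n) = (U' (y n) / U' (y (Suc n))) * (Lam n + d n - d (Suc n))"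
    and psi0: "psi 0 = y 0 + Lam 0" and Lam0: "\<bar>Lam 0\<bar> \<le> 2 * eps0"
    and dB: "\<And>n. n \<le> k \<Longrightarrow> \<bar>d n\<bar> \<le> eps0"
    and rho: "0 < rho" and eps0: "0 \<le> eps0"
    and small1: "(Bc k + 2) * eps0 \<le> rho"
    and small2: "M1 * ((Bc k + 2) * eps0) < m0 * rho"
  shows "n \<le> k \<Longrightarrow> \<bar>psi n - y n\<bar> \<le> Bc n * eps0 \<and> \<bar>psi n - y n - Lam n\<bar> \<le> Cc n * eps0\<^sup>2"
proof (induction n)
  case 0
  then show ?case using psi0 Lam0 by simp
next
  case (Suc n)
  have nk: "n < k" using Suc.prems by simp
  note IH = Suc.IH[OF less_imp_le[OF nk]]
  have ab: "a \<le> b" using yK[of 0] rho by auto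
  have yn: "y n - 2 * rho \<in> {a..b}" "y n + 2 * rho \<in> {a..b}" using yK[of n] nk by auto
  have ys: "y (Suc n) - 2 * rho \<in> {a..b}" "y (Suc n) + 2 * rho \<in> {a..b}" using yK[of "Suc n"] nk by auto
  have ynK: "y n \<in> {a..b}" using yn rho by auto
  have ysK: "y (Suc n) \<in> {a..b}" using ys rho by auto
  have ys1: "y (Suc n) - rho \<in> {a..b}" "y (Suc n) + rho \<in> {a..b}" using ys rho by auto
  define x where "x = psi n + d n - d (Suc n) - y n"
  have xB: "\<bar>x\<bar> \<le> (Bc n + 2) * eps0"
    using IH dB[of n] dB[of "Suc n"] nk unfolding x_def by (auto simp: algebra_simps)
  have BB: "(Bc n + 2) * eps0 \<le> (Bc k + 2) * eps0"
    using Bc_mono[OF ab, of n k] nk eps0 by (simp add: mult_right_mono)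
  have xr: "\<bar>x\<bar> \<le> rho" using xB BB small1 by simp
  have yxK: "y n + x \<in> {a..b}" using yn xr rho by (auto simp: abs_le_iff)
  have UxB: "\<bar>U (y n + x) - U (y n)\<bar> \<le> M1 * \<bar>x\<bar>" using lipU[OF ynK yxK] by simp
  have M1nn: "0 \<le> M1" using M1m0[OF ab] m0 by simp
  have Ux_small: "\<bar>U (y n + x) - U (y n)\<bar> < m0 * rho"
  proof -
    have "M1 * \<bar>x\<bar> \<le> M1 * ((Bc k + 2) * eps0)" using xB BB M1nn by (simp add: mult_left_mono)
    then show ?thesis using UxB small2 by simp
  qed
  have yI: "y n + x \<in> I" using yxK KI by auto
  have rng: "U (y n + x) + e (Suc n) \<in> U ` I"
  proof (rule margin[OF ys1 rho])
    show "\<bar>U (y n + x) + e (Suc n) - U (y (Suc n))\<bar> \<le> m0 * rho" using Ux_small yU[OF nk] by simp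
  qed
  have pe: "psi n + d n - d (Suc n) = y n + x" unfolding x_def by simp
  define w where "w = psi (Suc n)"
  have w_eq: "w = Hmap U I (e (Suc n)) (y n + x)" using psiS[OF nk] pe w_def by simp
  have wI: "w \<in> I" and Uw: "U w = U (y n + x) + e (Suc n)"
    using Hmap_props[OF inj yI rng] w_eq by auto
  have "\<bar>U w - U (y (Suc n))\<bar> < m0 * rho" using Uw yU[OF nk] Ux_small by simp
  then have "\<bar>w - y (Suc n)\<bar> < rho" using margin2[OF ys1 rho wI] by simp
  then have wK: "w \<in> {a..b}" using ys rho by (auto simp: abs_less_iff)
  note H = hstep[OF ynK yxK ysK wK yU[OF nk] Uw]
  have qqnn: "0 \<le> qq" using qq_ge1[OF ab] by simp
  have B: "\<bar>w - y (Suc n)\<bar> \<le> Bc (Suc n) * eps0"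
  proof -
    have "qq * \<bar>x\<bar> \<le> qq * ((Bc n + 2) * eps0)" using xB qqnn by (simp add: mult_left_mono)
    then show ?thesis using H(1) by simp
  qed
  define q where "q = U' (y n) / U' (y (Suc n))"
  have q: "0 \<le> q" "q \<le> qq"
  proof -
    have a1: "m0 \<le> U' (y n)" "U' (y n) \<le> M1" using bnds[OF ynK] by auto
    have a2: "m0 \<le> U' (y (Suc n))" using bnds[OF ysK] by auto
    show "0 \<le> q" using a1 a2 m0 by (simp add: q_def)
    have "U' (y n) / U' (y (Suc n)) \<le> M1 / U' (y (Suc n))" using a1 a2 m0 by (simp add: divide_right_mono)
    also have "\<dots> \<le> M1 / m0" using a2 m0 M1nn by (simp add: divide_left_mono)
    finally show "q \<le> qq" by (simp add: q_def qq_def)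
  qed
  have decomp: "w - y (Suc n) - Lam (Suc n) = (w - y (Suc n) - q * x) + q * (psi n - y n - Lam n)"
  proof -
    have L: "Lam (Suc n) = q * (Lam n + d n - d (Suc n))" using LamS[OF nk] q_def by simp
    show ?thesis unfolding L x_def by (simp add: algebra_simps)
  qed
  have t1: "\<bar>w - y (Suc n) - q * x\<bar> \<le> cc * ((Bc n + 2) * eps0)\<^sup>2"
  proof -
    have "x\<^sup>2 \<le> ((Bc n + 2) * eps0)\<^sup>2"
      using power_mono[OF xB, of 2] by simp
    then have "cc * x\<^sup>2 \<le> cc * ((Bc n + 2) * eps0)\<^sup>2" using cc_nn[OF ab] by (simp add: mult_left_mono)
    then show ?thesis using H(2) unfolding q_def by simp
  qed
  have t2: "\<bar>q * (psi n - y n - Lam n)\<bar> \<le> qq * (Cc n * eps0\<^sup>2)"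
  proof -
    have "\<bar>q * (psi n - y n - Lam n)\<bar> = q * \<bar>psi n - y n - Lam n\<bar>" using q by (simp add: abs_mult)
    also have "\<dots> \<le> qq * \<bar>psi n - y n - Lam n\<bar>" using q by (simp add: mult_right_mono)
    also have "\<dots> \<le> qq * (Cc n * eps0\<^sup>2)" using IH qqnn by (simp add: mult_left_mono)
    finally show ?thesis .
  qed
  have C: "\<bar>w - y (Suc n) - Lam (Suc n)\<bar> \<le> Cc (Suc n) * eps0\<^sup>2"
  proof -
    have "\<bar>w - y (Suc n) - Lam (Suc n)\<bar> \<le> cc * ((Bc n + 2) * eps0)\<^sup>2 + qq * (Cc n * eps0\<^sup>2)"
      unfolding decomp using t1 t2 by (smt (verit))
    also have "\<dots> = Cc (Suc n) * eps0\<^sup>2" unfolding power_mult_distrib Cc.simps by (simp add: algebra_simps)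
    finally show ?thesis .
  qed
  show ?case using B C w_def by simp
qed

end

fun LamF :: "(real \<Rightarrow> real) \<Rightarrow> (nat \<Rightarrow> real) \<Rightarrow> (nat \<Rightarrow> real) \<Rightarrow> real \<Rightarrow> nat \<Rightarrow> real" where
  "LamF U' y d l0 0 = l0"
| "LamF U' y d l0 (Suc n) = (U' (y n) / U' (y (Suc n))) * (LamF U' y d l0 n + d n - d (Suc n))"

lemma lam_identity:
  assumes nz: "\<And>n. U' (y n) \<noteq> 0"
  shows "U' (y n) * (LamF U' y d l0 n + d n) = U' (y 0) * (l0 + d 0) + (\<Sum>m\<in>{1..n}. (U' (y m) - U' (y (m - 1))) * d m)"
proof (induction n)
  case 0 then show ?case by simp
next
  case (Suc n)
  have "U' (y (Suc n)) * (LamF U' y d l0 (Suc n) + d (Suc n))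
      = U' (y n) * (LamF U' y d l0 n + d n - d (Suc n)) + U' (y (Suc n)) * d (Suc n)"
    using nz[of "Suc n"] by (simp add: field_simps)
  also have "\<dots> = U' (y n) * (LamF U' y d l0 n + d n) + (U' (y (Suc n)) - U' (y n)) * d (Suc n)"
    by (simp add: algebra_simps)
  also have "\<dots> = U' (y 0) * (l0 + d 0) + (\<Sum>m\<in>{1..Suc n}. (U' (y m) - U' (y (m - 1))) * d m)"
    using Suc by simp
  finally show ?case .
qed

lemma stab_sum:
  assumes i: "i \<in> {1..N}" and bij: "bij_betw (Ord i) {1..card (Pre i)} (Pre i)"
    and sub: "Pre i \<subseteq> {1..N} - {i}"
  shows "(\<Sum>l\<in>{1..N}. stabA U U' I Pre eps epsilon tau Ord i l * delta l)
     = pcoef U U' I eps epsilon tau Ord i 0 * delta i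
       + (\<Sum>n\<in>{1..card (Pre i)}. (pcoef U U' I eps epsilon tau Ord i n - pcoef U U' I eps epsilon tau Ord i (n - 1)) * delta (Ord i n))"
proof -
  let ?k = "card (Pre i)"
  let ?P = "pcoef U U' I eps epsilon tau Ord i"
  let ?f = "\<lambda>l. stabA U U' I Pre eps epsilon tau Ord i l * delta l"
  have inj: "inj_on (Ord i) {1..?k}" using bij bij_betw_imp_inj_on by blast
  have surj: "Ord i ` {1..?k} = Pre i" using bij bij_betw_imp_surj_on by blast
  have fin: "finite {1..N}" by simp
  have s1: "(\<Sum>l\<in>{1..N}. ?f l) = ?f i + (\<Sum>l\<in>{1..N} - {i}. ?f l)"
    using sum.remove[OF fin i] by simp
  have fi: "?f i = ?P 0 * delta i" by (simp add: stabA_def)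
  have s2: "(\<Sum>l\<in>{1..N} - {i}. ?f l) = (\<Sum>l\<in>Pre i. ?f l)"
  proof (rule sum.mono_neutral_right)
    show "finite ({1..N} - {i})" by simp
    show "Pre i \<subseteq> {1..N} - {i}" using sub .
    show "\<forall>l\<in>{1..N} - {i} - Pre i. ?f l = 0"
    proof
      fix l assume l: "l \<in> {1..N} - {i} - Pre i"
      then have "\<not> (\<exists>n\<in>{1..?k}. Ord i n = l)" using surj by auto
      then show "?f l = 0" using l by (simp add: stabA_def)
    qed
  qed
  have s3: "(\<Sum>l\<in>Pre i. ?f l) = (\<Sum>n\<in>{1..?k}. ?f (Ord i n))"
  proof -
    have "(\<Sum>l\<in>Ord i ` {1..?k}. ?f l) = (\<Sum>n\<in>{1..?k}. ?f (Ord i n))"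
      by (rule sum.reindex[OF inj, unfolded comp_def])
    then show ?thesis by (simp only: surj)
  qed
  have s4: "?f (Ord i n) = (?P n - ?P (n - 1)) * delta (Ord i n)" if n: "n \<in> {1..?k}" for n
  proof -
    have "Ord i n \<in> Pre i" using surj n by blast
    then have ni: "Ord i n \<noteq> i" using sub by blast
    have ex: "\<exists>n'\<in>{1..?k}. Ord i n' = Ord i n" using n by auto
    have th: "(THE n'. n' \<in> {1..?k} \<and> Ord i n' = Ord i n) = n"
    proof (rule the_equality)
      show "n \<in> {1..?k} \<and> Ord i n = Ord i n" using n by simp
      fix n' assume "n' \<in> {1..?k} \<and> Ord i n' = Ord i n"
      then show "n' = n" using inj_onD[OF inj] n by blast
    qed
    have "stabA U U' I Pre eps epsilon tau Ord i (Ord i n) = ?P n - ?P (n - 1)"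
      unfolding stabA_def Let_def by (simp only: ni ex th if_False if_True)
    then show ?thesis by simp
  qed
  show ?thesis using s1 fi s2 s3 s4 by simp
qed


context Kloc begin

lemma inj_U: "inj_on U I"
proof (rule inj_onI, rule ccontr)
  fix x z assume x: "x \<in> I" and z: "z \<in> I" and eq: "U x = U z" and ne: "x \<noteq> z"
  show False
  proof (cases "x < z")
    case True then show ?thesis using mono_U[OF Iint Ider Ipos x z] eq by simp
  next
    case False then have "z < x" using ne by simp
    then show ?thesis using mono_U[OF Iint Ider Ipos z x] eq by simp
  qed
qed

lemma lam_identity2:
  assumes nz: "\<And>m. m \<le> n \<Longrightarrow> U' (y m) \<noteq> 0"
  shows "U' (y n) * (LamF U' y d l0 n + d n) = U' (y 0) * (l0 + d 0) + (\<Sum>m\<in>{1..n}. (U' (y m) - U' (y (m - 1))) * d m)"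
  using nz
proof (induction n)
  case 0 then show ?case by simp
next
  case (Suc n)
  have IH: "U' (y n) * (LamF U' y d l0 n + d n) = U' (y 0) * (l0 + d 0) + (\<Sum>m\<in>{1..n}. (U' (y m) - U' (y (m - 1))) * d m)"
    using Suc.IH Suc.prems by simp
  have "U' (y (Suc n)) * (LamF U' y d l0 (Suc n) + d (Suc n))
      = U' (y n) * (LamF U' y d l0 n + d n - d (Suc n)) + U' (y (Suc n)) * d (Suc n)"
    using Suc.prems[of "Suc n"] by (simp add: field_simps)
  also have "\<dots> = U' (y n) * (LamF U' y d l0 n + d n) + (U' (y (Suc n)) - U' (y n)) * d (Suc n)"
    by (simp add: algebra_simps)
  also have "\<dots> = U' (y 0) * (l0 + d 0) + (\<Sum>m\<in>{1..Suc n}. (U' (y m) - U' (y (m - 1))) * d m)"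
    using IH by simp
  finally show ?case .
qed

lemma core:
  fixes N :: nat and Pre :: "nat \<Rightarrow> nat set" and eps :: "nat \<Rightarrow> nat \<Rightarrow> real"
    and epsilon tau theta ymax beta rho :: real and delta :: "nat \<Rightarrow> real" and Ord :: "nat \<Rightarrow> nat \<Rightarrow> nat"
  assumes I01: "{0..1} \<subseteq> I"
    and Pre_sub: "\<And>i. i \<in> {1..N} \<Longrightarrow> Pre i \<subseteq> {1..N} - {i}"
    and Pre_ne: "\<And>i. i \<in> {1..N} \<Longrightarrow> Pre i \<noteq> {}"
    and epsPre: "\<And>i. i \<in> {1..N} \<Longrightarrow> (\<Sum>j\<in>Pre i. eps i j) = epsilon"
    and tau: "0 < tau" "tau < 1"
    and in_range: "\<And>i S. i \<in> {1..N} \<Longrightarrow> S \<subseteq> Pre i \<Longrightarrow> U tau + (\<Sum>j\<in>S. eps i j) \<in> U ` I"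
    and N1: "1 \<le> N"
    and rho: "0 < rho"
    and Yb: "\<And>i S. i \<in> {1..N} \<Longrightarrow> S \<subseteq> Pre i \<Longrightarrow>
        the_inv_into I U (U tau + (\<Sum>j\<in>S. eps i j)) - 2 * rho \<in> {a..b} \<and>
        the_inv_into I U (U tau + (\<Sum>j\<in>S. eps i j)) + 2 * rho \<in> {a..b} \<and>
        the_inv_into I U (U tau + (\<Sum>j\<in>S. eps i j)) \<le> ymax \<and>
        U tau + (\<Sum>j\<in>S. eps i j) \<le> 1 - beta"
    and s1: "(Bc N + 2) * dnorm N delta \<le> rho"
    and s2: "M1 * ((Bc N + 2) * dnorm N delta) < m0 * rho"
    and s3: "M1 * ((Bc N + 2) * dnorm N delta) < beta"
    and s4: "ymax + (Bc N + 2) * dnorm N delta < 1"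
    and s5: "theta + (Bc N + 2) * dnorm N delta < 1"
    and s6: "dnorm N delta < theta - the_inv_into I U (U tau + epsilon)"
    and s7: "2 * dnorm N delta < 1 - tau"
    and gap: "\<forall>i\<in>{1..N}. \<forall>j\<in>{1..N}. delta i - delta j < tau"
    and ord: "\<forall>i\<in>{1..N}. bij_betw (Ord i) {1..card (Pre i)} (Pre i)
               \<and> (\<forall>n m. 1 \<le> n \<longrightarrow> n \<le> m \<longrightarrow> m \<le> card (Pre i) \<longrightarrow> delta (Ord i m) \<le> delta (Ord i n))"
  shows "\<forall>i\<in>{1..N}.
               \<bar>(phases_at U I N Pre eps tau (init_state theta delta)
                   (tau + 1 - the_inv_into I U (U tau + epsilon)) i - theta)
                - (\<Sum>l\<in>{1..N}. stabA U U' I Pre eps epsilon tau Ord i l * delta l)\<bar>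
               \<le> Cc N * (dnorm N delta)\<^sup>2"
proof -
  define e0 where "e0 = dnorm N delta"
  have dB: "\<bar>delta l\<bar> \<le> e0" if "l \<in> {1..N}" for l
    unfolding e0_def dnorm_def using that by (intro Max_ge) auto
  have e0nn: "0 \<le> e0" using dB[of 1] N1 by force
  have ab: "a \<le> b" using Yb[of 1 "{}"] N1 rho by auto
  have inj: "inj_on U I" by (rule inj_U)
  have tauI: "tau \<in> I" using I01 tau by auto
  define inv0 where "inv0 = the_inv_into I U"
  have inv0U: "inv0 v \<in> I \<and> U (inv0 v) = v" if "v \<in> U ` I" for v
    using that inj unfolding inv0_def by (auto simp: the_inv_into_into f_the_inv_into_f)
  define yy where "yy i n = inv0 (U tau + (\<Sum>m = 1..n. eps i (Ord i m)))" for i n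
  define dd where "dd i n = delta (Ord i (max 1 n))" for i n
  define LL where "LL i = LamF U' (yy i) (dd i) (delta i - dd i 1)" for i
  define alpha where "alpha = inv0 (U tau + epsilon)"
  define Tend where "Tend = tau + 1 - alpha"
  have bijO: "bij_betw (Ord i) {1..card (Pre i)} (Pre i)" if "i \<in> {1..N}" for i using ord that by blast
  have injO: "inj_on (Ord i) {1..card (Pre i)}" if "i \<in> {1..N}" for i
    using bijO[OF that] bij_betw_imp_inj_on by blast
  have surjO: "Ord i ` {1..card (Pre i)} = Pre i" if "i \<in> {1..N}" for i
    using bijO[OF that] bij_betw_imp_surj_on by blast
  have finPre: "finite (Pre i)" if "i \<in> {1..N}" for i
    using Pre_sub[OF that] finite_subset by blast
  have kN: "card (Pre i) \<le> N" if "i \<in> {1..N}" for i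
  proof -
    have "card (Pre i) \<le> card {1..N}" using Pre_sub[OF that] by (intro card_mono) auto
    then show ?thesis by simp
  qed
  have k1: "1 \<le> card (Pre i)" if "i \<in> {1..N}" for i
    using Pre_ne[OF that] finPre[OF that] by (simp add: Suc_le_eq card_gt_0_iff)
  have OrdN: "Ord i n \<in> {1..N}" if "i \<in> {1..N}" "n \<in> {1..card (Pre i)}" for i n
    using surjO[OF that(1)] Pre_sub[OF that(1)] that(2) by blast
  have sumO: "(\<Sum>m = 1..n. eps i (Ord i m)) = (\<Sum>j\<in>Ord i ` {1..n}. eps i j) \<and> Ord i ` {1..n} \<subseteq> Pre i"
    if i: "i \<in> {1..N}" and n: "n \<le> card (Pre i)" for i n
  proof
    have sub: "{1..n} \<subseteq> {1..card (Pre i)}" using n by auto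
    show "(\<Sum>m = 1..n. eps i (Ord i m)) = (\<Sum>j\<in>Ord i ` {1..n}. eps i j)"
      using sum.reindex[OF inj_on_subset[OF injO[OF i] sub], of "eps i"] by (simp add: comp_def)
    show "Ord i ` {1..n} \<subseteq> Pre i" using surjO[OF i] sub by blast
  qed
  have yyF: "yy i n - 2 * rho \<in> {a..b} \<and> yy i n + 2 * rho \<in> {a..b} \<and> yy i n \<le> ymax
      \<and> U tau + (\<Sum>m = 1..n. eps i (Ord i m)) \<le> 1 - beta
      \<and> U tau + (\<Sum>m = 1..n. eps i (Ord i m)) \<in> U ` I"
    if i: "i \<in> {1..N}" and n: "n \<le> card (Pre i)" for i n
    using Yb[OF i conjunct2[OF sumO[OF i n]]] in_range[OF i conjunct2[OF sumO[OF i n]]]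
      conjunct1[OF sumO[OF i n]] unfolding yy_def inv0_def by simp
  have Uyy: "yy i n \<in> I \<and> U (yy i n) = U tau + (\<Sum>m = 1..n. eps i (Ord i m))"
    if i: "i \<in> {1..N}" and n: "n \<le> card (Pre i)" for i n
    using inv0U yyF[OF i n] unfolding yy_def by blast
  have yy0: "yy i 0 = tau" for i
    unfolding yy_def inv0_def using inj tauI by (simp add: the_inv_into_f_f)
  have yyk: "yy i (card (Pre i)) = alpha" if i: "i \<in> {1..N}" for i
  proof -
    have "(\<Sum>m = 1..card (Pre i). eps i (Ord i m)) = (\<Sum>j\<in>Pre i. eps i j)"
      using conjunct1[OF sumO[OF i order_refl]] surjO[OF i] by simp
    then show ?thesis unfolding yy_def alpha_def using epsPre[OF i] by simp
  qed
  have ddB: "\<bar>dd i n\<bar> \<le> e0" if i: "i \<in> {1..N}" and n: "n \<le> card (Pre i)" for i n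
  proof -
    have "max 1 n \<in> {1..card (Pre i)}" using n k1[OF i] by auto
    then show ?thesis unfolding dd_def using dB OrdN[OF i] by blast
  qed
  interpret S0: sim0 U I N Pre eps tau theta Tend delta Ord .
  have arr_eq: "S0.arr i n = 1 - theta - dd i n + tau" for i n
    by (simp add: S0.arr_def S0.ff_def dd_def)
  have Bmono: "Bc n \<le> Bc N" if "n \<le> N" for n using Bc_mono[OF ab that] .
  have errb: "\<bar>S0.psi i n - yy i n\<bar> \<le> Bc n * e0 \<and> \<bar>S0.psi i n - yy i n - LL i n\<bar> \<le> Cc n * e0\<^sup>2"
    if i: "i \<in> {1..N}" and n: "n \<le> card (Pre i)" for i n
  proof (rule err[OF inj, where k = "card (Pre i)" and e = "\<lambda>n. eps i (Ord i n)" and d = "dd i" and rho = rho])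
    show "\<And>n. n \<le> card (Pre i) \<Longrightarrow> yy i n - 2 * rho \<in> {a..b} \<and> yy i n + 2 * rho \<in> {a..b}"
      using yyF[OF i] by blast
    show "\<And>n. n < card (Pre i) \<Longrightarrow> U (yy i (Suc n)) = U (yy i n) + eps i (Ord i (Suc n))"
      using Uyy[OF i] by simp
    show "\<And>n. n < card (Pre i) \<Longrightarrow> S0.psi i (Suc n) = Hmap U I (eps i (Ord i (Suc n))) (S0.psi i n + dd i n - dd i (Suc n))"
      by (simp add: arr_eq algebra_simps)
    show "\<And>n. n < card (Pre i) \<Longrightarrow> LL i (Suc n) = U' (yy i n) / U' (yy i (Suc n)) * (LL i n + dd i n - dd i (Suc n))"
      by (simp add: LL_def)
    show "S0.psi i 0 = yy i 0 + LL i 0" by (simp add: yy0 LL_def dd_def)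
    show "\<bar>LL i 0\<bar> \<le> 2 * e0" using dB[OF i] ddB[OF i, of 1] k1[OF i] by (simp add: LL_def)
    show "\<And>n. n \<le> card (Pre i) \<Longrightarrow> \<bar>dd i n\<bar> \<le> e0" using ddB[OF i] by blast
    show "0 < rho" by (rule rho)
    show "0 \<le> e0" by (rule e0nn)
    have BB: "(Bc (card (Pre i)) + 2) * e0 \<le> (Bc N + 2) * e0"
      using Bmono[OF kN[OF i]] e0nn by (simp add: mult_right_mono)
    show "(Bc (card (Pre i)) + 2) * e0 \<le> rho" using BB s1 e0_def by simp
    have M1nn: "0 \<le> M1" using M1m0[OF ab] m0 by simp
    show "M1 * ((Bc (card (Pre i)) + 2) * e0) < m0 * rho"
      using mult_left_mono[OF BB M1nn] s2 e0_def by simp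
    show "n \<le> card (Pre i)" by (rule n)
  qed
  have M1nn: "0 \<le> M1" using M1m0[OF ab] m0 by simp
  have BNnn: "0 \<le> Bc N" using Bc_nn[OF ab] .
  have sB: "(Bc N + 2) * e0 \<le> rho" "M1 * ((Bc N + 2) * e0) < m0 * rho" "M1 * ((Bc N + 2) * e0) < beta"
    "ymax + (Bc N + 2) * e0 < 1" "theta + (Bc N + 2) * e0 < 1" "e0 < theta - alpha" "2 * e0 < 1 - tau"
    using s1 s2 s3 s4 s5 s6 s7 unfolding e0_def alpha_def inv0_def by auto
  have e0le: "e0 \<le> (Bc N + 2) * e0" using BNnn e0nn by (simp add: mult_le_cancel_right1)
  have Bne0: "Bc n * e0 \<le> Bc N * e0" if "n \<le> N" for n using Bmono[OF that] e0nn by (simp add: mult_right_mono)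
  have SIM: "sim U I N Pre eps tau theta Tend delta Ord"
  proof unfold_locales
    show "inj_on U I" by (rule inj)
    show "1 \<le> N" by (rule N1)
    show "\<And>i. i \<in> {1..N} \<Longrightarrow> Pre i \<subseteq> {1..N}" using Pre_sub by blast
    show "\<And>i. i \<in> {1..N} \<Longrightarrow> Pre i \<noteq> {}" by (rule Pre_ne)
    show "\<And>i. i \<in> {1..N} \<Longrightarrow> bij_betw (Ord i) {1..card (Pre i)} (Pre i)" by (rule bijO)
    show "\<And>i n m. i \<in> {1..N} \<Longrightarrow> 1 \<le> n \<Longrightarrow> n \<le> m \<Longrightarrow> m \<le> card (Pre i) \<Longrightarrow> delta (Ord i m) \<le> delta (Ord i n)"
      using ord by blast
    show "\<And>i j. i \<in> {1..N} \<Longrightarrow> j \<in> {1..N} \<Longrightarrow> delta i - delta j < tau" using gap by blast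
    show "\<And>i j. i \<in> {1..N} \<Longrightarrow> j \<in> {1..N} \<Longrightarrow> delta i - delta j < 1 - tau"
    proof -
      fix i j assume "i \<in> {1..N}" "j \<in> {1..N}"
      then show "delta i - delta j < 1 - tau" using dB[of i] dB[of j] sB(7) by (simp add: abs_le_iff)
    qed
    show "\<And>i. i \<in> {1..N} \<Longrightarrow> theta + delta i < 1"
    proof -
      fix i assume "i \<in> {1..N}"
      then show "theta + delta i < 1" using dB[of i] sB(5) e0le by (simp add: abs_le_iff)
    qed
    show "\<And>i n j l. i \<in> {1..N} \<Longrightarrow> 1 \<le> n \<Longrightarrow> n \<le> card (Pre i) \<Longrightarrow> j \<in> {1..N} \<Longrightarrow> l \<in> {1..N}
               \<Longrightarrow> S0.psi i n + delta j - delta l < 1"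
    proof -
      fix i n j l assume i: "i \<in> {1..N}" and n: "1 \<le> n" "n \<le> card (Pre i)" and j: "j \<in> {1..N}" and l: "l \<in> {1..N}"
      have "S0.psi i n \<le> yy i n + Bc n * e0" using errb[OF i n(2)] by (simp add: abs_le_iff)
      also have "\<dots> \<le> ymax + Bc N * e0" using yyF[OF i n(2)] Bne0[of n] kN[OF i] n by simp
      finally have "S0.psi i n \<le> ymax + Bc N * e0" .
      moreover have "delta j - delta l \<le> 2 * e0" using dB[OF j] dB[OF l] by (simp add: abs_le_iff)
      ultimately show "S0.psi i n + delta j - delta l < 1" using sB(4) by (simp add: algebra_simps)
    qed
    show "\<And>i m. i \<in> {1..N} \<Longrightarrow> m < card (Pre i) \<Longrightarrow>
               S0.psi i m + S0.arr i (Suc m) - S0.arr i m \<in> I \<and>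
               (\<forall>S \<subseteq> Pre i - Ord i ` {1..m}.
                  U (S0.psi i m + S0.arr i (Suc m) - S0.arr i m) + (\<Sum>j\<in>S. eps i j) \<in> U ` I \<and>
                  U (S0.psi i m + S0.arr i (Suc m) - S0.arr i m) + (\<Sum>j\<in>S. eps i j) < 1)"
    proof -
      fix i m assume i: "i \<in> {1..N}" and m: "m < card (Pre i)"
      have mk: "m \<le> card (Pre i)" using m by simp
      define x' where "x' = S0.psi i m + S0.arr i (Suc m) - S0.arr i m"
      have x'eq: "x' = S0.psi i m + dd i m - dd i (Suc m)" unfolding x'_def arr_eq by simp
      have xB: "\<bar>x' - yy i m\<bar> \<le> (Bc N + 2) * e0"
      proof -
        have "\<bar>x' - yy i m\<bar> \<le> \<bar>S0.psi i m - yy i m\<bar> + \<bar>dd i m\<bar> + \<bar>dd i (Suc m)\<bar>"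
          unfolding x'eq by (smt (verit))
        also have "\<dots> \<le> Bc N * e0 + e0 + e0"
          using errb[OF i mk] ddB[OF i mk] ddB[OF i, of "Suc m"] m Bne0[of m] kN[OF i] by simp
        finally show ?thesis by (simp add: algebra_simps)
      qed
      have yyK: "yy i m - 2 * rho \<in> {a..b}" "yy i m + 2 * rho \<in> {a..b}" using yyF[OF i mk] by auto
      have yymK: "yy i m \<in> {a..b}" using yyK rho by auto
      have x'K: "x' \<in> {a..b}" using xB sB(1) yyK rho by (auto simp: abs_le_iff)
      have x'I: "x' \<in> I" using x'K KI by auto
      have Ud: "\<bar>U x' - U (yy i m)\<bar> \<le> M1 * ((Bc N + 2) * e0)"
      proof -
        have "\<bar>U x' - U (yy i m)\<bar> \<le> M1 * \<bar>x' - yy i m\<bar>" using lipU[OF yymK x'K] by simp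
        also have "\<dots> \<le> M1 * ((Bc N + 2) * e0)" using xB M1nn by (simp add: mult_left_mono)
        finally show ?thesis .
      qed
      have part: "U x' + (\<Sum>j\<in>S. eps i j) \<in> U ` I \<and> U x' + (\<Sum>j\<in>S. eps i j) < 1"
        if S: "S \<subseteq> Pre i - Ord i ` {1..m}" for S
      proof -
        define T where "T = Ord i ` {1..m} \<union> S"
        have OS: "Ord i ` {1..m} \<subseteq> Pre i" using sumO[OF i mk] by blast
        have TP: "T \<subseteq> Pre i" using S OS unfolding T_def by blast
        have finS: "finite S" using S finPre[OF i] finite_subset by blast
        have sumT: "(\<Sum>j\<in>T. eps i j) = (\<Sum>j\<in>Ord i ` {1..m}. eps i j) + (\<Sum>j\<in>S. eps i j)"
          unfolding T_def using S finS by (intro sum.union_disjoint) auto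
        have Uym: "U (yy i m) = U tau + (\<Sum>j\<in>Ord i ` {1..m}. eps i j)"
          using Uyy[OF i mk] sumO[OF i mk] by simp
        define yT where "yT = the_inv_into I U (U tau + (\<Sum>j\<in>T. eps i j))"
        have YT: "yT - 2 * rho \<in> {a..b}" "yT + 2 * rho \<in> {a..b}" "U tau + (\<Sum>j\<in>T. eps i j) \<le> 1 - beta"
          using Yb[OF i TP] unfolding yT_def by auto
        have UyT: "U yT = U tau + (\<Sum>j\<in>T. eps i j)"
          using inv0U[OF in_range[OF i TP]] unfolding yT_def inv0_def by simp
        have veq: "U x' + (\<Sum>j\<in>S. eps i j) - U yT = U x' - U (yy i m)"
          using UyT Uym sumT by simp
        have YT1: "yT - rho \<in> {a..b}" "yT + rho \<in> {a..b}" using YT(1,2) rho by auto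
        have "U x' + (\<Sum>j\<in>S. eps i j) \<in> U ` I"
          by (rule margin[OF YT1 rho]) (use veq Ud sB(2) in simp)
        moreover have "U x' + (\<Sum>j\<in>S. eps i j) < 1"
          using veq Ud sB(3) YT(3) UyT by (simp add: abs_le_iff)
        ultimately show ?thesis by simp
      qed
      show "S0.psi i m + S0.arr i (Suc m) - S0.arr i m \<in> I \<and>
               (\<forall>S \<subseteq> Pre i - Ord i ` {1..m}.
                  U (S0.psi i m + S0.arr i (Suc m) - S0.arr i m) + (\<Sum>j\<in>S. eps i j) \<in> U ` I \<and>
                  U (S0.psi i m + S0.arr i (Suc m) - S0.arr i m) + (\<Sum>j\<in>S. eps i j) < 1)"
        using x'I part unfolding x'_def by blast
    qed
    show "S0.alast < Tend"
    proof -
      have "\<forall>x\<in>(\<lambda>j. S0.ff j + tau) ` {1..N}. x < Tend"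
      proof
        fix x assume "x \<in> (\<lambda>j. S0.ff j + tau) ` {1..N}"
        then obtain j where j: "j \<in> {1..N}" "x = S0.ff j + tau" by blast
        show "x < Tend" using j dB[OF j(1)] sB(6) by (simp add: S0.ff_def Tend_def abs_le_iff)
      qed
      then show ?thesis unfolding S0.alast_def using N1 by (subst Max_less_iff) auto
    qed
    show "\<And>i. i \<in> {1..N} \<Longrightarrow> S0.psi i (card (Pre i)) + Tend - S0.arr i (card (Pre i)) < 1"
    proof -
      fix i assume i: "i \<in> {1..N}"
      let ?k = "card (Pre i)"
      have "S0.psi i ?k \<le> alpha + Bc N * e0"
        using errb[OF i order_refl] yyk[OF i] Bne0[OF kN[OF i]] by (simp add: abs_le_iff)
      moreover have "dd i ?k \<le> e0" using ddB[OF i order_refl] by (simp add: abs_le_iff)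
      ultimately show "S0.psi i ?k + Tend - S0.arr i ?k < 1"
        using sB(5) e0nn unfolding arr_eq Tend_def by (simp add: algebra_simps)
    qed
  qed
  show ?thesis
  proof
    fix i assume i: "i \<in> {1..N}"
    let ?k = "card (Pre i)"
    have ph: "phases_at U I N Pre eps tau (init_state theta delta) Tend i = S0.psi i ?k + Tend - S0.arr i ?k"
      using sim.phases_final[OF SIM i] .
    have yyI: "yy i n \<in> I" if "n \<le> ?k" for n using Uyy[OF i that] by simp
    have U'pos: "0 < U' (yy i n)" if "n \<le> ?k" for n using Ipos[OF yyI[OF that]] .
    have alI: "0 < U' alpha" using U'pos[of ?k] yyk[OF i] by simp
    have P: "pcoef U U' I eps epsilon tau Ord i n = U' (yy i n) / U' alpha" for n
      by (simp add: pcoef_def yy_def inv0_def alpha_def)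
    have ident: "U' (yy i ?k) * (LL i ?k + dd i ?k) = U' (yy i 0) * (delta i - dd i 1 + dd i 0)
        + (\<Sum>m\<in>{1..?k}. (U' (yy i m) - U' (yy i (m - 1))) * dd i m)"
      unfolding LL_def by (rule lam_identity2) (use U'pos in force)
    have dd0: "dd i 0 = dd i 1" by (simp add: dd_def)
    have sums: "(\<Sum>n\<in>{1..?k}. (pcoef U U' I eps epsilon tau Ord i n - pcoef U U' I eps epsilon tau Ord i (n - 1)) * delta (Ord i n))
        = (\<Sum>m\<in>{1..?k}. (U' (yy i m) - U' (yy i (m - 1))) * dd i m) / U' alpha"
      unfolding sum_divide_distrib P
    proof (rule sum.cong)
      fix n assume "n \<in> {1..?k}"
      then have "dd i n = delta (Ord i n)" by (simp add: dd_def)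
      then show "(U' (yy i n) / U' alpha - U' (yy i (n - 1)) / U' alpha) * delta (Ord i n)
          = (U' (yy i n) - U' (yy i (n - 1))) * dd i n / U' alpha"
        using alI by (simp add: field_simps)
    qed simp
    have stab: "(\<Sum>l\<in>{1..N}. stabA U U' I Pre eps epsilon tau Ord i l * delta l) = LL i ?k + dd i ?k"
    proof -
      have "(\<Sum>l\<in>{1..N}. stabA U U' I Pre eps epsilon tau Ord i l * delta l)
          = U' (yy i 0) / U' alpha * delta i + (\<Sum>m\<in>{1..?k}. (U' (yy i m) - U' (yy i (m - 1))) * dd i m) / U' alpha"
        using stab_sum[of i N Ord Pre U U' I eps epsilon tau delta, OF i bijO[OF i] Pre_sub[OF i]] sums P[of 0] by simp
      also have "\<dots> = U' (yy i ?k) * (LL i ?k + dd i ?k) / U' alpha"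
        using ident dd0 alI by (simp add: field_simps)
      also have "\<dots> = LL i ?k + dd i ?k" using yyk[OF i] alI by simp
      finally show ?thesis .
    qed
    have diff: "phases_at U I N Pre eps tau (init_state theta delta) (tau + 1 - the_inv_into I U (U tau + epsilon)) i - theta
        - (\<Sum>l\<in>{1..N}. stabA U U' I Pre eps epsilon tau Ord i l * delta l) = S0.psi i ?k - yy i ?k - LL i ?k"
      using ph stab yyk[OF i] unfolding Tend_def alpha_def inv0_def arr_eq by simp
    have "\<bar>S0.psi i ?k - yy i ?k - LL i ?k\<bar> \<le> Cc ?k * e0\<^sup>2" using errb[OF i order_refl] by simp
    also have "\<dots> \<le> Cc N * e0\<^sup>2" using Cc_mono[OF ab kN[OF i]] by (simp add: mult_right_mono)
    finally show "\<bar>phases_at U I N Pre eps tau (init_state theta delta) (tau + 1 - the_inv_into I U (U tau + epsilon)) i - theta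
        - (\<Sum>l\<in>{1..N}. stabA U U' I Pre eps epsilon tau Ord i l * delta l)\<bar> \<le> Cc N * (dnorm N delta)\<^sup>2"
      using diff e0_def by simp
  qed
qed

end

theorem mainTheorem9:
  fixes U U' U'' :: "real \<Rightarrow> real" and I :: "real set"
    and N :: nat and Pre :: "nat \<Rightarrow> nat set" and eps :: "nat \<Rightarrow> nat \<Rightarrow> real"
    and epsilon tau theta :: real
  assumes I_interval: "is_interval I" and I_open: "open I" and I01: "{0..1} \<subseteq> I"
    and U_deriv: "\<And>x. x \<in> I \<Longrightarrow> (U has_real_derivative U' x) (at x)"
    and U'_deriv: "\<And>x. x \<in> I \<Longrightarrow> (U' has_real_derivative U'' x) (at x)"
    and U''_cont: "continuous_on I U''"
    and U'_pos: "\<And>x. x \<in> I \<Longrightarrow> U' x > 0"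
    and U''_neg: "\<And>x. x \<in> I \<Longrightarrow> U'' x < 0"
    and U0: "U 0 = 0" and U1: "U 1 = 1"
    and Pre_sub: "\<And>i. i \<in> {1..N} \<Longrightarrow> Pre i \<subseteq> {1..N} - {i}"
    and Pre_ne: "\<And>i. i \<in> {1..N} \<Longrightarrow> Pre i \<noteq> {}"
    and eps_nz: "\<And>i j. i \<in> {1..N} \<Longrightarrow> j \<in> {1..N} \<Longrightarrow> (eps i j \<noteq> 0 \<longleftrightarrow> j \<in> Pre i)"
    and eps_sum: "\<And>i. i \<in> {1..N} \<Longrightarrow> (\<Sum>j\<in>{1..N}. eps i j) = epsilon"
    and tau: "0 < tau" "tau < 1"
    and sub_total: "U tau + epsilon < 1"
    and sub_partial: "\<And>i S. i \<in> {1..N} \<Longrightarrow> S \<subseteq> Pre i \<Longrightarrow> U tau + (\<Sum>j\<in>S. eps i j) < 1"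
    and in_range: "\<And>i S. i \<in> {1..N} \<Longrightarrow> S \<subseteq> Pre i \<Longrightarrow> U tau + (\<Sum>j\<in>S. eps i j) \<in> U ` I"
    and theta: "the_inv_into I U (U tau + epsilon) < theta" "theta < 1"
  shows "\<exists>C>0. \<exists>r>0. \<forall>delta :: nat \<Rightarrow> real. \<forall>Ord :: nat \<Rightarrow> nat \<Rightarrow> nat.
           dnorm N delta < r
         \<and> (\<forall>i\<in>{1..N}. \<forall>j\<in>{1..N}. delta i - delta j < tau)
         \<and> (\<forall>i\<in>{1..N}. bij_betw (Ord i) {1..card (Pre i)} (Pre i)
               \<and> (\<forall>n m. 1 \<le> n \<longrightarrow> n \<le> m \<longrightarrow> m \<le> card (Pre i) \<longrightarrow> delta (Ord i m) \<le> delta (Ord i n)))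
         \<longrightarrow> (\<forall>i\<in>{1..N}.
               \<bar>(phases_at U I N Pre eps tau (init_state theta delta)
                   (tau + 1 - the_inv_into I U (U tau + epsilon)) i - theta)
                - (\<Sum>l\<in>{1..N}. stabA U U' I Pre eps epsilon tau Ord i l * delta l)\<bar>
               \<le> C * (dnorm N delta)\<^sup>2)"
proof (cases "N = 0")
  case True
  show ?thesis by (rule exI[of _ 1], simp, rule exI[of _ 1]) (simp add: True)
next
  case False
  then have N1: "1 \<le> N" by simp
  have inj: "inj_on U I"
  proof (rule inj_onI, rule ccontr)
    fix x z assume x: "x \<in> I" and z: "z \<in> I" and eq: "U x = U z" and ne: "x \<noteq> z"
    show False
    proof (cases "x < z")
      case True then show ?thesis using mono_U[OF I_interval U_deriv U'_pos x z] eq by simp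
    next
      case False then have "z < x" using ne by simp
      then show ?thesis using mono_U[OF I_interval U_deriv U'_pos z x] eq by simp
    qed
  qed
  have epsPre: "(\<Sum>j\<in>Pre i. eps i j) = epsilon" if i: "i \<in> {1..N}" for i
  proof -
    have "(\<Sum>j\<in>Pre i. eps i j) = (\<Sum>j\<in>{1..N}. eps i j)"
    proof (rule sum.mono_neutral_left)
      show "finite {1..N}" by simp
      show "Pre i \<subseteq> {1..N}" using Pre_sub[OF i] by blast
      show "\<forall>j\<in>{1..N} - Pre i. eps i j = 0" using eps_nz[OF i] by blast
    qed
    then show ?thesis using eps_sum[OF i] by simp
  qed
  define D where "D = (\<Union>i\<in>{1..N}. (\<lambda>S. U tau + (\<Sum>j\<in>S. eps i j)) ` Pow (Pre i))"
  have finPre: "finite (Pre i)" if "i \<in> {1..N}" for i using Pre_sub[OF that] finite_subset by blast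
  have finD: "finite D" unfolding D_def using finPre by auto
  have neD: "D \<noteq> {}" unfolding D_def using N1 by auto
  have DI: "d \<in> U ` I" if "d \<in> D" for d using that in_range unfolding D_def by auto
  have Dl1: "d < 1" if "d \<in> D" for d using that sub_partial unfolding D_def by auto
  define inv0 where "inv0 = the_inv_into I U"
  have inv0U: "inv0 v \<in> I \<and> U (inv0 v) = v" if "v \<in> U ` I" for v
    using that inj unfolding inv0_def by (auto simp: the_inv_into_into f_the_inv_into_f)
  define Y where "Y = inv0 ` D"
  have finY: "finite Y" and neY: "Y \<noteq> {}" using finD neD unfolding Y_def by auto
  have YI: "y \<in> I" if "y \<in> Y" for y using that inv0U DI unfolding Y_def by auto
  define ylo where "ylo = Min Y"
  define yhi where "yhi = Max Y"
  have yloI: "ylo \<in> I" using Min_in[OF finY neY] YI ylo_def by simp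
  have yhiI: "yhi \<in> I" using Max_in[OF finY neY] YI yhi_def by simp
  obtain e1 where e1: "0 < e1" "ball ylo e1 \<subseteq> I" using I_open yloI open_contains_ball by blast
  obtain e2 where e2: "0 < e2" "ball yhi e2 \<subseteq> I" using I_open yhiI open_contains_ball by blast
  define rho where "rho = min e1 e2 / 4"
  have rho: "0 < rho" using e1 e2 by (simp add: rho_def)
  define a where "a = ylo - 2 * rho"
  define b where "b = yhi + 2 * rho"
  have aI: "a \<in> I"
  proof -
    have "a \<in> ball ylo e1" using rho e1 by (simp add: a_def dist_real_def rho_def)
    then show ?thesis using e1 by blast
  qed
  have bI: "b \<in> I"
  proof -
    have "b \<in> ball yhi e2" using rho e2 by (simp add: b_def dist_real_def rho_def)
    then show ?thesis using e2 by blast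
  qed
  have lohi: "ylo \<le> yhi" unfolding ylo_def yhi_def using Min_le[OF finY Max_in[OF finY neY]] .
  have ab: "a \<le> b" using lohi rho by (simp add: a_def b_def)
  have KI: "{a..b} \<subseteq> I" using mem_is_interval_1_I[OF I_interval aI bI] by auto
  have contU': "continuous_on {a..b} U'"
  proof (rule DERIV_continuous_on[of _ _ U''])
    fix x assume "x \<in> {a..b}"
    then have "x \<in> I" using KI by auto
    then show "(U' has_real_derivative U'' x) (at x within {a..b})"
      using U'_deriv has_field_derivative_at_within by blast
  qed
  have contU'': "continuous_on {a..b} (\<lambda>x. \<bar>U'' x\<bar>)"
    using continuous_on_subset[OF U''_cont KI] by (intro continuous_intros)
  have cpt: "compact {a..b}" and neK: "{a..b} \<noteq> {}" using ab by auto
  obtain x0 where x0: "x0 \<in> {a..b}" "\<forall>y\<in>{a..b}. U' x0 \<le> U' y"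
    using continuous_attains_inf[OF cpt neK contU'] by blast
  obtain x1 where x1: "x1 \<in> {a..b}" "\<forall>y\<in>{a..b}. U' y \<le> U' x1"
    using continuous_attains_sup[OF cpt neK contU'] by blast
  obtain x2 where x2: "x2 \<in> {a..b}" "\<forall>y\<in>{a..b}. \<bar>U'' y\<bar> \<le> \<bar>U'' x2\<bar>"
    using continuous_attains_sup[OF cpt neK contU''] by blast
  define m0 where "m0 = U' x0"
  define M1 where "M1 = U' x1"
  define M2 where "M2 = \<bar>U'' x2\<bar>"
  have m0: "0 < m0" using U'_pos x0(1) KI unfolding m0_def by auto
  interpret K: Kloc U U' U'' I a b m0 M1 M2
  proof unfold_locales
    show "\<And>x. x \<in> I \<Longrightarrow> (U has_real_derivative U' x) (at x)" by (rule U_deriv)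
    show "\<And>x. x \<in> I \<Longrightarrow> (U' has_real_derivative U'' x) (at x)" by (rule U'_deriv)
    show "is_interval I" by (rule I_interval)
    show "\<And>x. x \<in> I \<Longrightarrow> 0 < U' x" by (rule U'_pos)
    show "{a..b} \<subseteq> I" by (rule KI)
    show "0 < m0" by (rule m0)
    show "\<And>x. x \<in> {a..b} \<Longrightarrow> m0 \<le> U' x \<and> U' x \<le> M1 \<and> \<bar>U'' x\<bar> \<le> M2"
      using x0 x1 x2 unfolding m0_def M1_def M2_def by blast
  qed
  have M1: "0 < M1" using K.M1m0[OF ab] m0 by simp
  define beta where "beta = 1 - Max D"
  have beta: "0 < beta" using Dl1 Max_in[OF finD neD] by (simp add: beta_def)
  have one: "1 \<in> I" using I01 by auto
  have yhi1: "yhi < 1"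
  proof -
    have "yhi \<in> Y" using Max_in[OF finY neY] yhi_def by simp
    then obtain d where d: "d \<in> D" "yhi = inv0 d" unfolding Y_def by blast
    have Uy: "U yhi = d" using inv0U[OF DI[OF d(1)]] d(2) by simp
    show ?thesis
    proof (rule ccontr)
      assume "\<not> yhi < 1"
      then have "1 \<le> yhi" by simp
      then have "U 1 \<le> U yhi" using mono_U[OF I_interval U_deriv U'_pos one yhiI] by (cases "yhi = 1") auto
      then show False using Uy Dl1[OF d(1)] U1 by simp
    qed
  qed
  define ymax where "ymax = yhi"
  have Yb: "the_inv_into I U (U tau + (\<Sum>j\<in>S. eps i j)) - 2 * rho \<in> {a..b} \<and>
        the_inv_into I U (U tau + (\<Sum>j\<in>S. eps i j)) + 2 * rho \<in> {a..b} \<and>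
        the_inv_into I U (U tau + (\<Sum>j\<in>S. eps i j)) \<le> ymax \<and>
        U tau + (\<Sum>j\<in>S. eps i j) \<le> 1 - beta" if i: "i \<in> {1..N}" and S: "S \<subseteq> Pre i" for i S
  proof -
    have dD: "U tau + (\<Sum>j\<in>S. eps i j) \<in> D" unfolding D_def using i S by blast
    have yY: "the_inv_into I U (U tau + (\<Sum>j\<in>S. eps i j)) \<in> Y" unfolding Y_def inv0_def using dD by blast
    have "ylo \<le> the_inv_into I U (U tau + (\<Sum>j\<in>S. eps i j))" "the_inv_into I U (U tau + (\<Sum>j\<in>S. eps i j)) \<le> yhi"
      using yY finY unfolding ylo_def yhi_def by auto
    moreover have "U tau + (\<Sum>j\<in>S. eps i j) \<le> Max D" using dD finD by simp
    ultimately show ?thesis using rho unfolding a_def b_def ymax_def beta_def by auto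
  qed
  define alpha where "alpha = the_inv_into I U (U tau + epsilon)"
  define s where "s = K.Bc N + 2"
  have s: "0 < s" using K.Bc_nn[OF ab, of N] by (simp add: s_def)
  define r where "r = min (min (min (rho / s) (m0 * rho / (M1 * s))) (min (beta / (M1 * s)) ((1 - ymax) / s)))
                       (min (min ((1 - theta) / s) (theta - alpha)) ((1 - tau) / 2))"
  have r: "0 < r" unfolding r_def using s rho m0 M1 beta yhi1 theta tau
    by (simp add: ymax_def alpha_def)
  define C where "C = K.Cc N + 1"
  have C: "0 < C" using K.Cc_nn[OF ab, of N] by (simp add: C_def)
  show ?thesis
    apply (rule exI[of _ C], rule conjI[OF C], rule exI[of _ r], rule conjI[OF r], intro allI impI)
    subgoal premises H for delta Ord
    proof -
    define e0 where "e0 = dnorm N delta"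
    have e0r: "e0 < r" using H e0_def by blast
    have r1: "s * e0 < rho" using e0r s unfolding r_def by (simp add: less_divide_eq mult.commute)
    have r2: "M1 * (s * e0) < m0 * rho"
    proof -
      have "e0 < m0 * rho / (M1 * s)" using e0r unfolding r_def by simp
      then show ?thesis using M1 s by (simp add: less_divide_eq mult.commute mult.left_commute)
    qed
    have r3: "M1 * (s * e0) < beta"
    proof -
      have "e0 < beta / (M1 * s)" using e0r unfolding r_def by simp
      then show ?thesis using M1 s by (simp add: less_divide_eq mult.commute mult.left_commute)
    qed
    have r4: "ymax + s * e0 < 1"
    proof -
      have "e0 < (1 - ymax) / s" using e0r unfolding r_def by simp
      then show ?thesis using s by (simp add: less_divide_eq mult.commute)
    qed
    have r5: "theta + s * e0 < 1"
    proof -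
      have "e0 < (1 - theta) / s" using e0r unfolding r_def by simp
      then show ?thesis using s by (simp add: less_divide_eq mult.commute)
    qed
    have r6: "e0 < theta - alpha" using e0r unfolding r_def by simp
    have r7: "2 * e0 < 1 - tau" using e0r unfolding r_def by simp
    have core: "\<forall>i\<in>{1..N}.
               \<bar>(phases_at U I N Pre eps tau (init_state theta delta)
                   (tau + 1 - the_inv_into I U (U tau + epsilon)) i - theta)
                - (\<Sum>l\<in>{1..N}. stabA U U' I Pre eps epsilon tau Ord i l * delta l)\<bar>
               \<le> K.Cc N * (dnorm N delta)\<^sup>2"
    proof (rule K.core[where ymax = ymax and beta = beta and rho = rho])
      show "{0..1} \<subseteq> I" by (rule I01)
      show "\<And>i. i \<in> {1..N} \<Longrightarrow> Pre i \<subseteq> {1..N} - {i}" by (rule Pre_sub)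
      show "\<And>i. i \<in> {1..N} \<Longrightarrow> Pre i \<noteq> {}" by (rule Pre_ne)
      show "\<And>i. i \<in> {1..N} \<Longrightarrow> (\<Sum>j\<in>Pre i. eps i j) = epsilon" by (rule epsPre)
      show "0 < tau" "tau < 1" using tau by auto
      show "\<And>i S. i \<in> {1..N} \<Longrightarrow> S \<subseteq> Pre i \<Longrightarrow> U tau + (\<Sum>j\<in>S. eps i j) \<in> U ` I" by (rule in_range)
      show "1 \<le> N" by (rule N1)
      show "0 < rho" by (rule rho)
      show "\<And>i S. i \<in> {1..N} \<Longrightarrow> S \<subseteq> Pre i \<Longrightarrow>
        the_inv_into I U (U tau + (\<Sum>j\<in>S. eps i j)) - 2 * rho \<in> {a..b} \<and>
        the_inv_into I U (U tau + (\<Sum>j\<in>S. eps i j)) + 2 * rho \<in> {a..b} \<and>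
        the_inv_into I U (U tau + (\<Sum>j\<in>S. eps i j)) \<le> ymax \<and>
        U tau + (\<Sum>j\<in>S. eps i j) \<le> 1 - beta" by (rule Yb)
      show "(K.Bc N + 2) * dnorm N delta \<le> rho" using r1 e0_def s_def by (simp add: mult.commute)
      show "M1 * ((K.Bc N + 2) * dnorm N delta) < m0 * rho" using r2 e0_def s_def by (simp add: mult.commute)
      show "M1 * ((K.Bc N + 2) * dnorm N delta) < beta" using r3 e0_def s_def by (simp add: mult.commute)
      show "ymax + (K.Bc N + 2) * dnorm N delta < 1" using r4 e0_def s_def by (simp add: mult.commute)
      show "theta + (K.Bc N + 2) * dnorm N delta < 1" using r5 e0_def s_def by (simp add: mult.commute)
      show "dnorm N delta < theta - the_inv_into I U (U tau + epsilon)" using r6 e0_def alpha_def by simp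
      show "2 * dnorm N delta < 1 - tau" using r7 e0_def by simp
      show "\<forall>i\<in>{1..N}. \<forall>j\<in>{1..N}. delta i - delta j < tau" using H by blast
      show "\<forall>i\<in>{1..N}. bij_betw (Ord i) {1..card (Pre i)} (Pre i)
               \<and> (\<forall>n m. 1 \<le> n \<longrightarrow> n \<le> m \<longrightarrow> m \<le> card (Pre i) \<longrightarrow> delta (Ord i m) \<le> delta (Ord i n))"
        using H by blast
    qed
    have "K.Cc N * (dnorm N delta)\<^sup>2 \<le> C * (dnorm N delta)\<^sup>2" by (simp add: C_def mult_right_mono)
    then show ?thesis using core by (meson order_trans)
  qed
  done
qed


end
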